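(* Let $E_1,E_2,E_3$ be pairwise disjoint (possibly empty) sets of edges on $\gamma_2$ with vertices in $[n]$. Suppose the edges of $E_1\cup E_2\cup E_3$ can be linearly ordered as $e_1,\dots,e_m$ such that: edges of $E_i$ come before edges of $E_j$ whenever $i<j$; for all $1\le i<j\le m$, either $e_i<_3e_j$ or $e_i$ and $e_j$ do not cross; and the edges of $E_2$ are pairwise non-crossing. Then there is a triangulation $T\in S(n,2)$ such that $e\le_3T$ for every $e\in E_1$, $e\in T$ for every $e\in E_2$, and $e\ge_3T$ (i.e. $T\le_3 e$) for every $e\in E_3$.
   Context: $\gamma_d=\{(t,t^2,\dots,t^d):t\in\mathbb{R}\}$. Fix $t_1<\dots<t_n$ and points $\gamma_2(t_i)$ identified with $i\in[n]$; $C(n,2)$ is their convex hull and $S(n,2)$ the set of triangulations of $C(n,2)$ with vertices in $[n]$. An edge is a 2-subset of $[n]$ identified with the segment it spans; two edges cross (overlap) if their segments meet outside their common vertices. For a simplex $\alpha\subseteq[n]$, $h_\alpha:\mathrm{conv}(\alpha)\to\mathbb{R}$ gives the last coordinate of the point of the convex hull of $\{\gamma_3(t_i):i\in\alpha\}$ projecting to $p$. $\alpha<_3\beta$ means $\alpha,\beta$ overlap and $h_\alpha\le h_\beta$ on $\mathrm{conv}(\alpha)\cap\mathrm{conv}(\beta)$. For $T\in S(n,2)$, $h_T(p)=h_\rho(p)$ for $p\in\mathrm{conv}(\rho)$, $\rho\in T$; $e\le_3T$ means $h_e\le h_T$ on $\mathrm{conv}(e)$, and $T\le_3e$ means $h_T\le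 h_e$ on $\mathrm{conv}(e)$. *)

theory Defs
  imports "HOL-Analysis.Analysis"
begin

text \<open>The parameters are t 1 < ... < t n, the point
  labelled i is gamma2 (t i) in the plane real \<times> real; its lift is gamma3 (t i),
  represented in (real \<times> real) \<times> real so that fst is the projection to the plane
  and snd is the last coordinate.\<close>

definition gamma2 :: "real \<Rightarrow> real \<times> real" where
  "gamma2 s = (s, s^2)"

definition gamma3 :: "real \<Rightarrow> (real \<times> real) \<times> real" where
  "gamma3 s = ((s, s^2), s^3)"

definition cnv :: "(nat \<Rightarrow> real) \<Rightarrow> nat set \<Rightarrow> (real \<times> real) set" where
  "cnv t \<alpha> = convex hull ((\<lambda>i. gamma2 (t i)) ` \<alpha>)"

definition hgt :: "(nat \<Rightarrow> real) \<Rightarrow> nat set \<Rightarrow> real \<times> real \<Rightarrow> real" where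
  "hgt t \<alpha> p = (THE z. (p, z) \<in> convex hull ((\<lambda>i. gamma3 (t i)) ` \<alpha>))"

definition is_edge :: "nat \<Rightarrow> nat set \<Rightarrow> bool" where
  "is_edge n e \<longleftrightarrow> e \<subseteq> {1..n} \<and> card e = 2"

text \<open>Two simplices overlap (for edges: cross) if their convex hulls meet outside
  their common vertices.\<close>
definition overlap :: "(nat \<Rightarrow> real) \<Rightarrow> nat set \<Rightarrow> nat set \<Rightarrow> bool" where
  "overlap t \<alpha> \<beta> \<longleftrightarrow>
     (\<exists>p \<in> cnv t \<alpha> \<inter> cnv t \<beta>. p \<notin> (\<lambda>i. gamma2 (t i)) ` (\<alpha> \<inter> \<beta>))"

definition less3 :: "(nat \<Rightarrow> real) \<Rightarrow> nat set \<Rightarrow> nat set \<Rightarrow> bool" where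
  "less3 t \<alpha> \<beta> \<longleftrightarrow> overlap t \<alpha> \<beta> \<and>
     (\<forall>p \<in> cnv t \<alpha> \<inter> cnv t \<beta>. hgt t \<alpha> p \<le> hgt t \<beta> p)"

text \<open>S(n,2): triangulations of C(n,2) with vertices in [n], given by their set of
  maximal (full-dimensional) simplices: affinely independent, covering C(n,2), and
  intersecting properly (the intersection of two is a common face).\<close>
definition triangulation :: "nat \<Rightarrow> (nat \<Rightarrow> real) \<Rightarrow> nat set set \<Rightarrow> bool" where
  "triangulation n t T \<longleftrightarrow>
     (\<forall>\<rho>\<in>T. \<rho> \<subseteq> {1..n} \<and> card \<rho> = min n 3 \<and>
              \<not> affine_dependent ((\<lambda>i. gamma2 (t i)) ` \<rho>)) \<and>
     (\<Union>\<rho>\<in>T. cnv t \<rho>) = cnv t {1..n} \<and>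
     (\<forall>\<rho>\<in>T. \<forall>\<sigma>\<in>T. cnv t \<rho> \<inter> cnv t \<sigma> = cnv t (\<rho> \<inter> \<sigma>))"

definition edge_in :: "nat set \<Rightarrow> nat set set \<Rightarrow> bool" where
  "edge_in e T \<longleftrightarrow> (\<exists>\<rho>\<in>T. e \<subseteq> \<rho>)"

definition hT :: "(nat \<Rightarrow> real) \<Rightarrow> nat set set \<Rightarrow> real \<times> real \<Rightarrow> real" where
  "hT t T p = hgt t (SOME \<rho>. \<rho> \<in> T \<and> p \<in> cnv t \<rho>) p"

definition le3_edge_tri :: "(nat \<Rightarrow> real) \<Rightarrow> nat set \<Rightarrow> nat set set \<Rightarrow> bool" where
  "le3_edge_tri t e T \<longleftrightarrow> (\<forall>p \<in> cnv t e. hgt t e p \<le> hT t T p)"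

definition le3_tri_edge :: "(nat \<Rightarrow> real) \<Rightarrow> nat set set \<Rightarrow> nat set \<Rightarrow> bool" where
  "le3_tri_edge t T e \<longleftrightarrow> (\<forall>p \<in> cnv t e. hT t T p \<le> hgt t e p)"

end

theory Submission
  imports Defs
begin


definition aff :: "real \<Rightarrow> real \<Rightarrow> real \<Rightarrow> real \<times> real \<Rightarrow> real" where
  "aff c0 c1 c2 p = c0 + c1 * fst p + c2 * snd p"

lemma aff_gamma2[simp]: "aff c0 c1 c2 (gamma2 s) = c0 + c1 * s + c2 * s^2"
  by (simp add: aff_def gamma2_def)

lemma convex_aff_ge: "convex {p. aff c0 c1 c2 p \<ge> 0}"
proof -
  have "{p. aff c0 c1 c2 p \<ge> 0} = {p. inner (c1, c2) p \<ge> - c0}"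
    by (auto simp: aff_def inner_prod_def)
  then show ?thesis using convex_halfspace_ge by metis
qed

lemma hull_aff_ge:
  assumes "\<forall>k\<in>\<alpha>. aff c0 c1 c2 (gamma2 (t k)) \<ge> 0" "p \<in> cnv t \<alpha>"
  shows "aff c0 c1 c2 p \<ge> 0"
proof -
  have "cnv t \<alpha> \<subseteq> {p. aff c0 c1 c2 p \<ge> 0}"
    unfolding cnv_def by (rule hull_minimal) (use assms(1) convex_aff_ge in auto)
  then show ?thesis using assms(2) by auto
qed

lemma aff_lin: "u + v = 1 \<Longrightarrow> aff c0 c1 c2 (u *\<^sub>R p + v *\<^sub>R q) = u * aff c0 c1 c2 p + v * aff c0 c1 c2 q"
  by (simp add: aff_def algebra_simps) (metis add.commute add_diff_cancel_left' distrib_left mult.commute mult.right_neutral)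

lemma hgt_eq:
  assumes "\<forall>k\<in>\<alpha>. (t k)^3 = aff c0 c1 c2 (gamma2 (t k))" "p \<in> cnv t \<alpha>"
  shows "hgt t \<alpha> p = aff c0 c1 c2 p"
proof -
  let ?A = "aff c0 c1 c2"
  let ?C = "convex hull ((\<lambda>i. gamma3 (t i)) ` \<alpha>)"
  have cH: "convex {w. snd w = ?A (fst w)}"
    unfolding convex_def by (auto simp: aff_lin)
  have sub: "?C \<subseteq> {w. snd w = ?A (fst w)}"
    by (rule hull_minimal) (use assms(1) cH in \<open>auto simp: gamma3_def gamma2_def\<close>)
  have cQ: "convex {q. (q, ?A q) \<in> ?C}"
  proof (rule convexI)
    fix x y :: "real \<times> real" and u v :: real
    assume h: "x \<in> {q. (q, ?A q) \<in> ?C}" "y \<in> {q. (q, ?A q) \<in> ?C}" "0 \<le> u" "0 \<le> v" "u + v = 1"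
    have "u *\<^sub>R (x, ?A x) + v *\<^sub>R (y, ?A y) \<in> ?C"
      by (rule convexD[OF convex_convex_hull]) (use h in simp_all)
    moreover have "u *\<^sub>R (x, ?A x) + v *\<^sub>R (y, ?A y) = (u *\<^sub>R x + v *\<^sub>R y, ?A (u *\<^sub>R x + v *\<^sub>R y))"
      using h(5) by (simp add: aff_lin)
    ultimately show "u *\<^sub>R x + v *\<^sub>R y \<in> {q. (q, ?A q) \<in> ?C}" by simp
  qed
  have sub2: "(\<lambda>i. gamma2 (t i)) ` \<alpha> \<subseteq> {q. (q, ?A q) \<in> ?C}"
  proof (rule image_subsetI)
    fix k assume "k \<in> \<alpha>"
    then have "gamma3 (t k) \<in> ?C" by (simp add: hull_inc)
    moreover have "gamma3 (t k) = (gamma2 (t k), ?A (gamma2 (t k)))"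
      using assms(1) \<open>k \<in> \<alpha>\<close> by (auto simp: gamma3_def gamma2_def)
    ultimately show "gamma2 (t k) \<in> {q. (q, ?A q) \<in> ?C}" by simp
  qed
  have "cnv t \<alpha> \<subseteq> {q. (q, ?A q) \<in> ?C}"
    unfolding cnv_def by (rule hull_minimal[OF sub2]) (rule cQ)
  then have mem: "(p, ?A p) \<in> ?C" using assms(2) by auto
  show ?thesis unfolding hgt_def
  proof (rule the_equality)
    show "(p, ?A p) \<in> ?C" by (rule mem)
    fix z assume "(p, z) \<in> ?C"
    with sub have "(p, z) \<in> {w. snd w = ?A (fst w)}" by (rule subsetD)
    then show "z = ?A p" by simp
  qed
qed

lemma face_zero:
  assumes "finite \<alpha>" "\<forall>k\<in>\<alpha>. aff c0 c1 c2 (gamma2 (t k)) \<ge> 0" "p \<in> cnv t \<alpha>" "aff c0 c1 c2 p = 0"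
  shows "p \<in> cnv t {k\<in>\<alpha>. aff c0 c1 c2 (gamma2 (t k)) = 0}"
proof -
  let ?S = "(\<lambda>i. gamma2 (t i)) ` \<alpha>"
  have le: "\<And>x. x \<in> convex hull ?S \<Longrightarrow> inner (- c1, - c2) x \<le> c0"
    using hull_aff_ge[OF assms(2)] unfolding cnv_def by (fastforce simp: aff_def inner_prod_def)
  have "(convex hull ?S \<inter> {x. inner (- c1, - c2) x = c0}) face_of (convex hull ?S)"
    by (rule face_of_Int_supporting_hyperplane_le) (auto intro: le)
  moreover have "compact ?S" using assms(1) by (simp add: finite_imp_compact)
  ultimately obtain S' where S': "S' \<subseteq> ?S" "convex hull ?S \<inter> {x. inner (- c1, - c2) x = c0} = convex hull S'"
    using face_of_convex_hull_subset by blast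
  have "S' \<subseteq> (\<lambda>i. gamma2 (t i)) ` {k\<in>\<alpha>. aff c0 c1 c2 (gamma2 (t k)) = 0}"
  proof
    fix s assume "s \<in> S'"
    then have "s \<in> convex hull S'" by (simp add: hull_inc)
    then have "inner (- c1, - c2) s = c0" using S'(2) by blast
    moreover obtain k where "k \<in> \<alpha>" "s = gamma2 (t k)" using S'(1) \<open>s \<in> S'\<close> by auto
    ultimately show "s \<in> (\<lambda>i. gamma2 (t i)) ` {k\<in>\<alpha>. aff c0 c1 c2 (gamma2 (t k)) = 0}"
      by (auto simp: aff_def inner_prod_def)
  qed
  moreover have "p \<in> convex hull S'"
  proof -
    have "inner (- c1, - c2) p = c0" using assms(4) by (simp add: aff_def inner_prod_def)
    moreover have "p \<in> convex hull ?S" using assms(3) unfolding cnv_def .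
    ultimately have "p \<in> convex hull ?S \<inter> {x. inner (- c1, - c2) x = c0}" by blast
    then show ?thesis by (simp only: S'(2))
  qed
  ultimately have "p \<in> convex hull ((\<lambda>i. gamma2 (t i)) ` {k\<in>\<alpha>. aff c0 c1 c2 (gamma2 (t k)) = 0})"
    using hull_mono by blast
  then show ?thesis unfolding cnv_def .
qed





definition below :: "nat \<Rightarrow> nat \<Rightarrow> nat \<Rightarrow> nat \<Rightarrow> bool" where
  "below a b c d \<longleftrightarrow> a < c \<and> c < b \<and> b < d"

definition crs :: "nat \<Rightarrow> nat \<Rightarrow> nat \<Rightarrow> nat \<Rightarrow> bool" where
  "crs a b c d \<longleftrightarrow> below a b c d \<or> below c d a b"

definition Fb :: "(nat \<Rightarrow> nat \<Rightarrow> bool) \<Rightarrow> (nat \<Rightarrow> nat \<Rightarrow> bool) \<Rightarrow> (nat \<Rightarrow> nat \<Rightarrow> bool)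
   \<Rightarrow> nat \<Rightarrow> nat \<Rightarrow> bool" where
  "Fb R1 R2 R3 c d \<longleftrightarrow> (\<exists>u v. R1 u v \<and> below c d u v) \<or> (\<exists>u v. R3 u v \<and> below u v c d)
     \<or> (\<exists>u v. R2 u v \<and> crs u v c d)"

lemma FbI1: "R1 u v \<Longrightarrow> below c d u v \<Longrightarrow> Fb R1 R2 R3 c d"
  unfolding Fb_def by blast
lemma FbI3: "R3 u v \<Longrightarrow> below u v c d \<Longrightarrow> Fb R1 R2 R3 c d"
  unfolding Fb_def by blast
lemma FbI2: "R2 u v \<Longrightarrow> crs u v c d \<Longrightarrow> Fb R1 R2 R3 c d"
  unfolding Fb_def by blast
lemma FbE:
  assumes "Fb R1 R2 R3 c d"
  obtains (r1) u v where "R1 u v" "below c d u v"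
    | (r3) u v where "R3 u v" "below u v c d"
    | (r2) u v where "R2 u v" "crs u v c d"
  using assms unfolding Fb_def by blast

lemma Fb_Suc: "\<not> Fb R1 R2 R3 a (Suc a)"
  unfolding Fb_def crs_def below_def by auto

lemma apex:
  assumes H12: "\<And>u v c d. R1 u v \<Longrightarrow> R2 c d \<Longrightarrow> \<not> below c d u v"
    and H13: "\<And>u v c d. R1 u v \<Longrightarrow> R3 c d \<Longrightarrow> \<not> below c d u v"
    and H23: "\<And>u v c d. R2 u v \<Longrightarrow> R3 c d \<Longrightarrow> \<not> below c d u v"
    and H22: "\<And>u v c d. R2 u v \<Longrightarrow> R2 c d \<Longrightarrow> \<not> crs u v c d"
    and ij: "Suc i < j" and nij: "\<not> Fb R1 R2 R3 i j"
  shows "\<exists>m. i < m \<and> m < j \<and> \<not> Fb R1 R2 R3 i m \<and> \<not> Fb R1 R2 R3 m j"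
proof -
  let ?F = "Fb R1 R2 R3"
  define m where "m = (LEAST m. i < m \<and> \<not> ?F m j)"
  have ex: "i < j - 1 \<and> \<not> ?F (j - 1) j"
    using ij Fb_Suc[of R1 R2 R3 "j - 1"] by simp
  have m1: "i < m \<and> \<not> ?F m j"
    unfolding m_def by (rule LeastI[of _ "j - 1"]) (rule ex)
  have "m \<le> j - 1" unfolding m_def by (rule Least_le) (rule ex)
  then have mj: "m < j" using ij by simp
  have minim: "?F u j" if "i < u" "u < m" for u
    using not_less_Least[of u "\<lambda>m. i < m \<and> \<not> ?F m j"] that unfolding m_def[symmetric] by blast
  have im: "i < m" and nmj: "\<not> ?F m j" using m1 by auto
  have R2ok: "\<not> ?F u j" if "R2 u j" for u
  proof
    assume "?F u j"
    then show False
    proof (cases rule: FbE)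
      case (r1 x y) then show False using H12 that by blast
    next
      case (r3 x y) then show False using H23 that by blast
    next
      case (r2 x y) then show False using H22 that by blast
    qed
  qed
  have "\<not> ?F i m"
  proof
    assume "?F i m"
    then show False
    proof (cases rule: FbE)
      case (r1 u v)
      then have iu: "i < u" "u < m" "m < v" by (auto simp: below_def)
      have vj: "v \<le> j"
      proof (rule ccontr)
        assume "\<not> v \<le> j"
        then have "below i j u v" using iu mj by (simp add: below_def)
        then show False using nij FbI1 r1(1) by metis
      qed
      have "\<not> ?F u j"
      proof
        assume "?F u j"
        then show False
        proof (cases rule: FbE)
          case (r1 x y)
          then have "below i j x y" using iu by (auto simp: below_def)
          then show False using nij FbI1 r1(1) by metis
        next
          case (r3 x y)
          then have xy: "x < u" "u < y" "y < j" by (auto simp: below_def)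
          show False
          proof (cases "y < v")
            case True
            then have "below x y u v" using xy by (simp add: below_def)
            then show False using H13 \<open>R1 u v\<close> r3(1) by blast
          next
            case False
            show False
            proof (cases "x < i")
              case True
              then have "below x y i j" using xy iu by (simp add: below_def)
              then show False using nij FbI3 r3(1) by metis
            next
              case False
              then have "below x y m j" using xy iu \<open>\<not> y < v\<close> by (simp add: below_def)
              then show False using nmj FbI3 r3(1) by metis
            qed
          qed
        next
          case (r2 x y)
          from r2(2) consider "below x y u j" | "below u j x y" unfolding crs_def by blast
          then show False
          proof cases
            case 1
            then have xy: "x < u" "u < y" "y < j" by (auto simp: below_def)
            show False
            proof (cases "x < i")
              case True
              then have "crs x y i j" using xy iu by (simp add: below_def crs_def)
              then show False using nij FbI2 r2(1) by metis
            next
              case False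
              show False
              proof (cases "m < y")
                case True
                then have "crs x y m j" using xy iu False by (simp add: below_def crs_def)
                then show False using nmj FbI2 r2(1) by metis
              next
                case False
                then have "below x y u v" using xy iu by (simp add: below_def)
                then show False using H12 \<open>R1 u v\<close> r2(1) by blast
              qed
            qed
          next
            case 2
            then have "crs x y i j" using iu by (auto simp: below_def crs_def)
            then show False using nij FbI2 r2(1) by metis
          qed
        qed
      qed
      then show False using minim iu by blast
    next
      case (r3 u v)
      then have "below u v i j" using mj by (auto simp: below_def)
      then show False using nij FbI3 r3(1) by metis
    next
      case (r2 u v)
      from r2(2) consider "below u v i m" | "below i m u v" unfolding crs_def by blast
      then show False
      proof cases
        case 1
        then have "crs u v i j" using mj by (auto simp: below_def crs_def)
        then show False using nij FbI2 r2(1) by metis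
      next
        case 2
        then have iu: "i < u" "u < m" "m < v" by (auto simp: below_def)
        consider "j < v" | "v = j" | "v < j" by linarith
        then show False
        proof cases
          case 1
          then have "crs u v i j" using iu mj by (auto simp: below_def crs_def)
          then show False using nij FbI2 r2(1) by metis
        next
          case 2
          then show False using R2ok minim iu r2(1) by blast
        next
          case 3
          then have "crs u v m j" using iu by (auto simp: below_def crs_def)
          then show False using nmj FbI2 r2(1) by metis
        qed
      qed
    qed
  qed
  then show ?thesis using im mj nmj by blast
qed



inductive trng :: "(nat \<Rightarrow> nat \<Rightarrow> bool) \<Rightarrow> nat \<Rightarrow> nat \<Rightarrow> nat set set \<Rightarrow> bool" for P where
  base: "trng P i (Suc i) {}"
| step: "i < m \<Longrightarrow> m < j \<Longrightarrow> P i m \<Longrightarrow> P m j \<Longrightarrow> trng P i m A \<Longrightarrow> trng P m j B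
         \<Longrightarrow> trng P i j (insert {i, m, j} (A \<union> B))"

lemma trng_exists:
  assumes H12: "\<And>u v c d. R1 u v \<Longrightarrow> R2 c d \<Longrightarrow> \<not> below c d u v"
    and H13: "\<And>u v c d. R1 u v \<Longrightarrow> R3 c d \<Longrightarrow> \<not> below c d u v"
    and H23: "\<And>u v c d. R2 u v \<Longrightarrow> R3 c d \<Longrightarrow> \<not> below c d u v"
    and H22: "\<And>u v c d. R2 u v \<Longrightarrow> R2 c d \<Longrightarrow> \<not> crs u v c d"
  shows "i < j \<Longrightarrow> \<not> Fb R1 R2 R3 i j \<Longrightarrow> \<exists>T. trng (\<lambda>a b. \<not> Fb R1 R2 R3 a b) i j T"
proof (induction "j - i" arbitrary: i j rule: less_induct)
  case less
  show ?case
  proof (cases "j = Suc i")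
    case True
    then show ?thesis using trng.base by blast
  next
    case False
    then have "Suc i < j" using less.prems by simp
    from apex[OF H12 H13 H23 H22 this less.prems(2)] obtain m where
      m: "i < m" "m < j" "\<not> Fb R1 R2 R3 i m" "\<not> Fb R1 R2 R3 m j" by blast
    have d1: "m - i < j - i" and d2: "j - m < j - i" using m(1,2) by auto
    obtain A where A: "trng (\<lambda>a b. \<not> Fb R1 R2 R3 a b) i m A"
      using less.hyps[OF d1 m(1) m(3)] by blast
    obtain B where B: "trng (\<lambda>a b. \<not> Fb R1 R2 R3 a b) m j B"
      using less.hyps[OF d2 m(2) m(4)] by blast
    show ?thesis using trng.step[OF m(1,2) _ _ A B] m(3,4) by blast
  qed
qed



lemma trng_lt: "trng P i j T \<Longrightarrow> i < j"
  by (induction rule: trng.induct) auto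

lemma trng_tri: "trng P i j T \<Longrightarrow> \<rho> \<in> T \<Longrightarrow> \<exists>a b c. \<rho> = {a, b, c} \<and> i \<le> a \<and> a < b \<and> b < c \<and> c \<le> j
   \<and> P a b \<and> P b c \<and> (P a c \<or> (a = i \<and> c = j))"
proof (induction arbitrary: \<rho> rule: trng.induct)
  case (base i)
  then show ?case by simp
next
  case (step i m j A B)
  have lt: "i < m" "m < j" using step.hyps by auto
  from step.prems consider "\<rho> = {i, m, j}" | "\<rho> \<in> A" | "\<rho> \<in> B" by blast
  then show ?case
  proof cases
    case 1 then show ?thesis using step.hyps(1-4) by blast
  next
    case 2
    from step.IH(1)[OF this] obtain a b c where h: "\<rho> = {a, b, c}" "i \<le> a" "a < b" "b < c" "c \<le> m"
      "P a b" "P b c" "P a c \<or> (a = i \<and> c = m)" by blast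
    have "c \<le> j" using h(5) step.hyps(2) by simp
    moreover have "P a c" using h(8) step.hyps(3) by blast
    ultimately show ?thesis using h by blast
  next
    case 3
    from step.IH(2)[OF this] obtain a b c where h: "\<rho> = {a, b, c}" "m \<le> a" "a < b" "b < c" "c \<le> j"
      "P a b" "P b c" "P a c \<or> (a = m \<and> c = j)" by blast
    have "i \<le> a" using h(2) step.hyps(1) by simp
    moreover have "P a c" using h(8) step.hyps(4) by blast
    ultimately show ?thesis using h by blast
  qed
qed

lemma trng_top: "trng P i j T \<Longrightarrow> Suc i < j \<Longrightarrow> \<exists>m. i < m \<and> m < j \<and> {i, m, j} \<in> T"
  by (induction rule: trng.induct) auto



lemma trng_edge_in: "trng P i j T \<Longrightarrow> i \<le> u \<Longrightarrow> u < v \<Longrightarrow> v \<le> j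
   \<Longrightarrow> (\<forall>\<rho>\<in>T. \<forall>x\<in>\<rho>. \<forall>y\<in>\<rho>. x < y \<longrightarrow> \<not> crs u v x y)
   \<Longrightarrow> (u = i \<and> v = j) \<or> (\<exists>\<rho>\<in>T. {u, v} \<subseteq> \<rho>)"
proof (induction arbitrary: u v rule: trng.induct)
  case (base i)
  then have "u = i" "v = Suc i" by linarith+
  then show ?case by blast
next
  case (step i m j A B)
  let ?T = "insert {i, m, j} (A \<union> B)"
  have apx: "{i, m, j} \<in> ?T" by simp
  have ncT: "\<forall>x\<in>\<rho>. \<forall>y\<in>\<rho>. x < y \<longrightarrow> \<not> crs u v x y" if "\<rho> \<in> ?T" for \<rho>
    using step.prems(4) that by (rule bspec)
  have ncA: "\<forall>\<rho>\<in>A. \<forall>x\<in>\<rho>. \<forall>y\<in>\<rho>. x < y \<longrightarrow> \<not> crs u v x y"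
  proof
    fix \<rho> assume "\<rho> \<in> A" then have "\<rho> \<in> ?T" by simp
    then show "\<forall>x\<in>\<rho>. \<forall>y\<in>\<rho>. x < y \<longrightarrow> \<not> crs u v x y" by (rule ncT)
  qed
  have ncB: "\<forall>\<rho>\<in>B. \<forall>x\<in>\<rho>. \<forall>y\<in>\<rho>. x < y \<longrightarrow> \<not> crs u v x y"
  proof
    fix \<rho> assume "\<rho> \<in> B" then have "\<rho> \<in> ?T" by simp
    then show "\<forall>x\<in>\<rho>. \<forall>y\<in>\<rho>. x < y \<longrightarrow> \<not> crs u v x y" by (rule ncT)
  qed
  have nca: "\<forall>x\<in>{i, m, j}. \<forall>y\<in>{i, m, j}. x < y \<longrightarrow> \<not> crs u v x y" by (rule ncT[OF apx])
  have nc1: "\<not> crs u v i m"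
  proof -
    have "i \<in> {i, m, j}" "m \<in> {i, m, j}" by simp_all
    with nca have "i < m \<longrightarrow> \<not> crs u v i m" by blast
    then show ?thesis using step.hyps(1) by blast
  qed
  have nc2: "\<not> crs u v m j"
  proof -
    have "j \<in> {i, m, j}" "m \<in> {i, m, j}" by simp_all
    with nca have "m < j \<longrightarrow> \<not> crs u v m j" by blast
    then show ?thesis using step.hyps(2) by blast
  qed
  consider "v \<le> m" | "m \<le> u" | "u < m" "m < v" by linarith
  then show ?case
  proof cases
    case 1
    have "(u = i \<and> v = m) \<or> (\<exists>\<rho>\<in>A. {u, v} \<subseteq> \<rho>)"
      using step.IH(1)[OF step.prems(1,2) 1 ncA] .
    then show ?thesis using apx by blast
  next
    case 2
    have "(u = m \<and> v = j) \<or> (\<exists>\<rho>\<in>B. {u, v} \<subseteq> \<rho>)"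
      using step.IH(2)[OF 2 step.prems(2,3) ncB] .
    then show ?thesis using apx by blast
  next
    case 3
    show ?thesis
    proof (cases "u = i \<and> v = j")
      case True then show ?thesis using apx by blast
    next
      case False
      show ?thesis
      proof (cases "i < u")
        case True
        then have "crs u v i m" using 3 by (simp add: crs_def below_def)
        then show ?thesis using nc1 by blast
      next
        case nu: False
        then have "u = i" using step.prems(1) by simp
        then have "v < j" using False step.prems(3) by simp
        then have "crs u v m j" using 3 by (simp add: crs_def below_def)
        then show ?thesis using nc2 by blast
      qed
    qed
  qed
qed




lemma bary:
  fixes a b c x y :: real
  assumes "a < b" "b < c"
  shows "(y - (b+c)*x + b*c)/((a-b)*(a-c)) + (y - (a+c)*x + a*c)/((b-a)*(b-c)) + (y - (a+b)*x + a*b)/((c-a)*(c-b)) = 1"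
    and "(y - (b+c)*x + b*c)/((a-b)*(a-c)) * a + (y - (a+c)*x + a*c)/((b-a)*(b-c)) * b + (y - (a+b)*x + a*b)/((c-a)*(c-b)) * c = x"
    and "(y - (b+c)*x + b*c)/((a-b)*(a-c)) * a^2 + (y - (a+c)*x + a*c)/((b-a)*(b-c)) * b^2 + (y - (a+b)*x + a*b)/((c-a)*(c-b)) * c^2 = y"
proof -
  define qa where "qa = (a-b)*(a-c)"
  define qb where "qb = (b-a)*(b-c)"
  define qc where "qc = (c-a)*(c-b)"
  have n: "qa \<noteq> 0" "qb \<noteq> 0" "qc \<noteq> 0" using assms by (auto simp: qa_def qb_def qc_def)
  have "(y - (b+c)*x + b*c)/qa + (y - (a+c)*x + a*c)/qb + (y - (a+b)*x + a*b)/qc = 1"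
    using n by ((simp add: field_simps), (unfold qa_def qb_def qc_def), algebra)
  then show "(y - (b+c)*x + b*c)/((a-b)*(a-c)) + (y - (a+c)*x + a*c)/((b-a)*(b-c)) + (y - (a+b)*x + a*b)/((c-a)*(c-b)) = 1"
    by (simp only: qa_def qb_def qc_def)
  have "(y - (b+c)*x + b*c)/qa * a + (y - (a+c)*x + a*c)/qb * b + (y - (a+b)*x + a*b)/qc * c = x"
    using n by ((simp add: field_simps), (unfold qa_def qb_def qc_def), algebra)
  then show "(y - (b+c)*x + b*c)/((a-b)*(a-c)) * a + (y - (a+c)*x + a*c)/((b-a)*(b-c)) * b + (y - (a+b)*x + a*b)/((c-a)*(c-b)) * c = x"
    by (simp only: qa_def qb_def qc_def)
  have "(y - (b+c)*x + b*c)/qa * a^2 + (y - (a+c)*x + a*c)/qb * b^2 + (y - (a+b)*x + a*b)/qc * c^2 = y"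
    using n by ((simp add: field_simps), (unfold qa_def qb_def qc_def), algebra)
  then show "(y - (b+c)*x + b*c)/((a-b)*(a-c)) * a^2 + (y - (a+c)*x + a*c)/((b-a)*(b-c)) * b^2 + (y - (a+b)*x + a*b)/((c-a)*(c-b)) * c^2 = y"
    by (simp only: qa_def qb_def qc_def)
qed

lemma segpt:
  fixes a b x y :: real
  assumes "a < b" "a \<le> x" "x \<le> b" "y - (a+b)*x + a*b = 0"
  shows "\<exists>u. 0 \<le> u \<and> u \<le> 1 \<and> x = (1-u)*a + u*b \<and> y = (1-u)*a^2 + u*b^2"
proof -
  define u where "u = (x - a)/(b - a)"
  have u0: "0 \<le> u" using assms by (simp add: u_def)
  have u1: "u \<le> 1" using assms by (simp add: u_def)
  have uu: "u * (b - a) = x - a" using assms(1) by (simp add: u_def)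
  have "(1 - u)*a + u*b = a + u * (b - a)" by (simp add: algebra_simps)
  then have hx: "x = (1 - u)*a + u*b" using uu by simp
  have xx: "x = a + u*(b-a)" using uu by simp
  have "y = (a+b)*x - a*b" using assms(4) by simp
  also have "\<dots> = (a+b)*(a + u*(b-a)) - a*b" using xx by simp
  also have "\<dots> = (1 - u)*a^2 + u*b^2" by (simp add: algebra_simps power2_eq_square)
  finally have hy: "y = (1 - u)*a^2 + u*b^2" .
  show ?thesis using u0 u1 hx hy by blast
qed

lemma crosspt:
  fixes a b c d :: real
  assumes "a < c" "c < b" "b < d"
  shows "\<exists>x. a < x \<and> x < b \<and> c < x \<and> x < d \<and> (a+b)*x - a*b = (c+d)*x - c*d \<and>
     (a+b)*((a+b)*x - a*b) - a*b*x < (c+d)*((a+b)*x - a*b) - c*d*x"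
proof -
  define den where "den = c + d - a - b"
  have den: "den > 0" using assms by (simp add: den_def)
  define x where "x = (c*d - a*b)/den"
  have xd: "x * den = c*d - a*b" using den by (simp add: x_def)
  have e1: "(x - a) * den = (c-a)*(d-a)" using xd by (simp add: den_def algebra_simps)
  have e2: "(b - x) * den = (b-c)*(d-b)" using xd by (simp add: den_def algebra_simps)
  have e3: "(x - c) * den = (c-a)*(b-c)" using xd by (simp add: den_def algebra_simps)
  have e4: "(d - x) * den = (d-a)*(d-b)" using xd by (simp add: den_def algebra_simps)
  have "(x - a) * den > 0" using e1 assms by simp
  then have 1: "a < x" using den by (simp add: zero_less_mult_iff)
  have "(b - x) * den > 0" using e2 assms by simp
  then have 2: "x < b" using den by (simp add: zero_less_mult_iff)
  have "(x - c) * den > 0" using e3 assms by simp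
  then have 3: "c < x" using den by (simp add: zero_less_mult_iff)
  have "(d - x) * den > 0" using e4 assms by simp
  then have 4: "x < d" using den by (simp add: zero_less_mult_iff)
  have 5: "(a+b)*x - a*b = (c+d)*x - c*d" using xd by (simp add: den_def algebra_simps)
  have "((c+d)*((a+b)*x - a*b) - c*d*x) - ((a+b)*((a+b)*x - a*b) - a*b*x)
      = den*((a+b)*x - a*b) - (c*d - a*b)*x" by (simp add: den_def algebra_simps)
  also have "\<dots> = den*((a+b)*x - a*b) - (x*den)*x" using xd by simp
  also have "\<dots> = den * ((x - a) * (b - x))" by (simp add: algebra_simps)
  finally have "((c+d)*((a+b)*x - a*b) - c*d*x) - ((a+b)*((a+b)*x - a*b) - a*b*x) = den * ((x - a) * (b - x))" .
  moreover have "den * ((x - a) * (b - x)) > 0" using den 1 2 by simp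
  ultimately have 6: "(a+b)*((a+b)*x - a*b) - a*b*x < (c+d)*((a+b)*x - a*b) - c*d*x" by linarith
  show ?thesis using 1 2 3 4 5 6 by blast
qed

lemma xle:
  fixes ti tm tm1 x y :: real
  assumes "y - (ti+tm)*x + ti*tm \<le> 0" "tm < x" "ti < tm1"
  shows "y - (tm+tm1)*x + tm*tm1 < 0"
proof -
  have "(y - (tm+tm1)*x + tm*tm1) - (y - (ti+tm)*x + ti*tm) = (ti - tm1)*(x - tm)" by (simp add: algebra_simps)
  moreover have "(ti - tm1)*(x - tm) < 0" using assms by (simp add: mult_neg_pos)
  ultimately show ?thesis using assms(1) by linarith
qed

lemma xge:
  fixes tj tm tm0 x y :: real
  assumes "y - (tm+tj)*x + tm*tj \<le> 0" "x < tm" "tm0 < tj"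
  shows "y - (tm0+tm)*x + tm0*tm < 0"
proof -
  have "(y - (tm0+tm)*x + tm0*tm) - (y - (tm+tj)*x + tm*tj) = (tj - tm0)*(x - tm)" by (simp add: algebra_simps)
  moreover have "(tj - tm0)*(x - tm) < 0" using assms by (simp add: mult_pos_neg)
  ultimately show ?thesis using assms(1) by linarith
qed




definition Lf :: "(nat \<Rightarrow> real) \<Rightarrow> nat \<Rightarrow> nat \<Rightarrow> real \<times> real \<Rightarrow> real" where
  "Lf t a b = aff (t a * t b) (-(t a + t b)) 1"

lemma Lf_g: "Lf t a b (gamma2 s) = (s - t a) * (s - t b)"
  by (simp add: Lf_def algebra_simps power2_eq_square)

lemma Lf_eq: "Lf t a b p = snd p - (t a + t b) * fst p + t a * t b"
  by (simp add: Lf_def aff_def algebra_simps)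

lemma aff_neg: "aff (-c0) (-c1) (-c2) p = - aff c0 c1 c2 p"
  by (simp add: aff_def)

lemma hull_aff_le:
  assumes "\<forall>k\<in>\<alpha>. aff c0 c1 c2 (gamma2 (t k)) \<le> 0" "p \<in> cnv t \<alpha>"
  shows "aff c0 c1 c2 p \<le> 0"
proof -
  have "\<forall>k\<in>\<alpha>. aff (-c0) (-c1) (-c2) (gamma2 (t k)) \<ge> 0" using assms(1) by (simp only: aff_neg neg_0_le_iff_le)
  from hull_aff_ge[OF this assms(2)] show ?thesis by (simp only: aff_neg neg_0_le_iff_le)
qed

lemma cnv_empty: "cnv t {} = {}" by (simp add: cnv_def)

lemma cnv_sub_single: "Z \<subseteq> {m} \<Longrightarrow> cnv t Z \<subseteq> {gamma2 (t m)}"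
proof -
  assume "Z \<subseteq> {m}"
  then have "Z = {} \<or> Z = {m}" by (rule subset_singletonD)
  then show ?thesis by (elim disjE) (simp_all add: cnv_def)
qed

lemma cnv_mono: "\<alpha> \<subseteq> \<beta> \<Longrightarrow> cnv t \<alpha> \<subseteq> cnv t \<beta>"
  unfolding cnv_def by (intro hull_mono image_mono)

lemma cnv_inc: "k \<in> \<alpha> \<Longrightarrow> gamma2 (t k) \<in> cnv t \<alpha>"
  unfolding cnv_def by (intro hull_inc imageI)

definition tri3 :: "real \<Rightarrow> real \<Rightarrow> real \<Rightarrow> real \<times> real \<Rightarrow> real" where
  "tri3 x y z = aff (x*y*z) (-(x*y + y*z + x*z)) (x+y+z)"

lemma tri3_g: "tri3 x y z (gamma2 s) = s^3 - (s-x)*(s-y)*(s-z)"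
  by (simp add: tri3_def algebra_simps power2_eq_square power3_eq_cube)

lemma hgt_tri: "p \<in> cnv t {a, b, c} \<Longrightarrow> hgt t {a, b, c} p = tri3 (t a) (t b) (t c) p"
  unfolding tri3_def by (rule hgt_eq) (auto simp: algebra_simps power2_eq_square power3_eq_cube)

lemma hgt_edge: "p \<in> cnv t {u, v} \<Longrightarrow> hgt t {u, v} p = tri3 (t u) (t v) 0 p"
  unfolding tri3_def by (rule hgt_eq) (auto simp: algebra_simps power2_eq_square power3_eq_cube)

lemma seg_mem:
  assumes "t a < t b" "t a \<le> fst p" "fst p \<le> t b" "Lf t a b p = 0"
  shows "p \<in> cnv t {a, b}"
proof -
  have "snd p - (t a + t b) * fst p + t a * t b = 0" using assms(4) by (simp add: Lf_eq)
  from segpt[OF assms(1-3) this] obtain u where u: "0 \<le> u" "u \<le> 1"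
    "fst p = (1-u) * t a + u * t b" "snd p = (1-u) * (t a)^2 + u * (t b)^2" by blast
  have "p = (1 - u) *\<^sub>R gamma2 (t a) + u *\<^sub>R gamma2 (t b)"
    using u(3,4) by (simp add: prod_eq_iff gamma2_def)
  then have "p \<in> closed_segment (gamma2 (t a)) (gamma2 (t b))"
    using u(1,2) by (auto simp: in_segment)
  then show ?thesis by (simp add: segment_convex_hull cnv_def)
qed

lemma tri_mem:
  assumes "t a < t b" "t b < t c" "Lf t b c p \<ge> 0" "Lf t a c p \<le> 0" "Lf t a b p \<ge> 0"
  shows "p \<in> cnv t {a, b, c}"
proof -
  let ?x = "fst p" and ?y = "snd p"
  define la where "la = (?y - (t b + t c) * ?x + t b * t c)/((t a - t b)*(t a - t c))"
  define lb where "lb = (?y - (t a + t c) * ?x + t a * t c)/((t b - t a)*(t b - t c))"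
  define lc where "lc = (?y - (t a + t b) * ?x + t a * t b)/((t c - t a)*(t c - t b))"
  have s1: "la + lb + lc = 1" unfolding la_def lb_def lc_def by (rule bary(1)[OF assms(1,2)])
  have s2: "la * t a + lb * t b + lc * t c = ?x" unfolding la_def lb_def lc_def by (rule bary(2)[OF assms(1,2)])
  have s3: "la * (t a)^2 + lb * (t b)^2 + lc * (t c)^2 = ?y" unfolding la_def lb_def lc_def by (rule bary(3)[OF assms(1,2)])
  have "0 < (t a - t b)*(t a - t c)" using assms(1,2) by (simp add: mult_neg_neg)
  moreover have "0 \<le> ?y - (t b + t c) * ?x + t b * t c" using assms(3) by (simp add: Lf_eq)
  ultimately have la: "0 \<le> la" unfolding la_def by simp
  have "(t b - t a)*(t b - t c) < 0" using assms(1,2) by (simp add: mult_pos_neg)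
  moreover have "?y - (t a + t c) * ?x + t a * t c \<le> 0" using assms(4) by (simp add: Lf_eq)
  ultimately have lb: "0 \<le> lb" unfolding lb_def by (simp add: divide_nonpos_neg)
  have "0 < (t c - t a)*(t c - t b)" using assms(1,2) by simp
  moreover have "0 \<le> ?y - (t a + t b) * ?x + t a * t b" using assms(5) by (simp add: Lf_eq)
  ultimately have lc: "0 \<le> lc" unfolding lc_def by simp
  have "p = la *\<^sub>R gamma2 (t a) + lb *\<^sub>R gamma2 (t b) + lc *\<^sub>R gamma2 (t c)"
    using s2 s3 by (simp add: prod_eq_iff gamma2_def mult.commute)
  then have "p \<in> convex hull {gamma2 (t a), gamma2 (t b), gamma2 (t c)}"
    unfolding convex_hull_3 mem_Collect_eq
    by (intro exI[of _ la] exI[of _ lb] exI[of _ lc] conjI) (use la lb lc s1 in simp_all)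
  then show ?thesis by (simp add: cnv_def)
qed

lemma sep_gen:
  assumes "finite \<alpha>" "finite \<beta>" "\<forall>k\<in>\<alpha>. aff c0 c1 c2 (gamma2 (t k)) \<le> 0"
    "\<forall>k\<in>\<beta>. aff c0 c1 c2 (gamma2 (t k)) \<ge> 0" "p \<in> cnv t \<alpha>" "p \<in> cnv t \<beta>"
  shows "p \<in> cnv t {k\<in>\<alpha>. aff c0 c1 c2 (gamma2 (t k)) = 0}"
    and "p \<in> cnv t {k\<in>\<beta>. aff c0 c1 c2 (gamma2 (t k)) = 0}"
proof -
  have le: "aff c0 c1 c2 p \<le> 0" by (rule hull_aff_le[OF assms(3,5)])
  have ge: "aff c0 c1 c2 p \<ge> 0" by (rule hull_aff_ge[OF assms(4,6)])
  have z: "aff c0 c1 c2 p = 0" using le ge by simp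
  show "p \<in> cnv t {k\<in>\<beta>. aff c0 c1 c2 (gamma2 (t k)) = 0}"
    by (rule face_zero[OF assms(2,4,6) z])
  have "\<forall>k\<in>\<alpha>. aff (-c0) (-c1) (-c2) (gamma2 (t k)) \<ge> 0" using assms(3) by (simp only: aff_neg neg_0_le_iff_le)
  moreover have "aff (-c0) (-c1) (-c2) p = 0" using z by (simp only: aff_neg neg_equal_0_iff_equal)
  ultimately have "p \<in> cnv t {k\<in>\<alpha>. aff (-c0) (-c1) (-c2) (gamma2 (t k)) = 0}"
    using face_zero[OF assms(1) _ assms(5)] by blast
  then show "p \<in> cnv t {k\<in>\<alpha>. aff c0 c1 c2 (gamma2 (t k)) = 0}" by (simp only: aff_neg neg_equal_0_iff_equal)
qed

context
  fixes n :: nat and t :: "nat \<Rightarrow> real"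
  assumes mono: "strict_mono_on {1..n} t"
begin

lemma tlt: "k \<in> {1..n} \<Longrightarrow> l \<in> {1..n} \<Longrightarrow> t k < t l \<longleftrightarrow> k < l"
  using strict_mono_on_less[OF mono] by blast

lemma tle: "k \<in> {1..n} \<Longrightarrow> l \<in> {1..n} \<Longrightarrow> t k \<le> t l \<longleftrightarrow> k \<le> l"
  using strict_mono_on_less_eq[OF mono] by blast

lemma teq: "k \<in> {1..n} \<Longrightarrow> l \<in> {1..n} \<Longrightarrow> t k = t l \<longleftrightarrow> k = l"
  using strict_mono_on_eq[OF mono] by blast

lemma extreme:
  assumes "Z \<subseteq> {1..n}" "k \<in> {1..n}" "gamma2 (t k) \<in> cnv t Z"
  shows "k \<in> Z"
proof (rule ccontr)
  assume nk: "k \<notin> Z"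
  let ?f = "aff ((t k)^2) (-2 * t k) 1"
  have fg: "?f (gamma2 s) = (s - t k)^2" for s by (simp only: aff_gamma2) (simp add: power2_diff algebra_simps)
  have fin: "finite Z" using assms(1) finite_subset by blast
  have ge: "\<forall>l\<in>Z. ?f (gamma2 (t l)) \<ge> 0" by (simp only: fg) simp
  have m1: "gamma2 (t k) \<in> cnv t {l\<in>Z. ?f (gamma2 (t l)) = 0}"
    by (rule face_zero[OF fin ge assms(3)]) (simp only: fg, simp)
  have e1: "{l\<in>Z. ?f (gamma2 (t l)) = 0} = {}"
  proof -
    have "l = k" if "l \<in> Z" "?f (gamma2 (t l)) = 0" for l
    proof -
      have "(t l - t k)^2 = 0" using that(2) by (simp only: fg)
      then have "t l = t k" by simp
      then show "l = k" using teq[of l k] assms(1,2) that(1) by blast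
    qed
    then show ?thesis using nk by blast
  qed
  have "gamma2 (t k) \<in> cnv t {}" using m1 unfolding e1 .
  then show False by (simp add: cnv_empty)
qed

definition region :: "nat \<Rightarrow> nat \<Rightarrow> real \<times> real \<Rightarrow> bool" where
  "region i j p \<longleftrightarrow> t i \<le> fst p \<and> fst p \<le> t j \<and> Lf t i j p \<le> 0 \<and>
     (\<forall>k. i \<le> k \<longrightarrow> k < j \<longrightarrow> Lf t k (Suc k) p \<ge> 0)"

lemma region_cover:
  "trng Q i j T \<Longrightarrow> 1 \<le> i \<Longrightarrow> j \<le> n \<Longrightarrow> region i j p \<Longrightarrow> p \<in> cnv t {i, j} \<or> (\<exists>\<rho>\<in>T. p \<in> cnv t \<rho>)"
proof (induction arbitrary: p rule: trng.induct)
  case (base i)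
  have "Lf t i (Suc i) p \<le> 0" "Lf t i (Suc i) p \<ge> 0" using base.prems(3) unfolding region_def by auto
  then have z: "Lf t i (Suc i) p = 0" by simp
  have "t i < t (Suc i)" using tlt[of i "Suc i"] base.prems(1,2) by simp
  then have "p \<in> cnv t {i, Suc i}" using seg_mem[of t i "Suc i" p] z base.prems(3) unfolding region_def by blast
  then show ?case by blast
next
  case (step i m j A B)
  let ?T = "insert {i, m, j} (A \<union> B)"
  have im: "i < m" and mj: "m < j" by fact+
  have ti: "t i < t m" using tlt[of i m] im mj step.prems by simp
  have tj: "t m < t j" using tlt[of m j] im mj step.prems by simp
  have R: "t i \<le> fst p" "fst p \<le> t j" "Lf t i j p \<le> 0" "\<And>k. i \<le> k \<Longrightarrow> k < j \<Longrightarrow> Lf t k (Suc k) p \<ge> 0"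
    using step.prems(3) unfolding region_def by auto
  have apx: "cnv t {i, m} \<subseteq> cnv t {i, m, j}" "cnv t {m, j} \<subseteq> cnv t {i, m, j}"
    by (rule cnv_mono, blast)+
  show ?case
  proof (cases "Lf t i m p \<le> 0")
    case True
    have "fst p \<le> t m"
    proof (rule ccontr)
      assume "\<not> fst p \<le> t m"
      then have "t m < fst p" by simp
      moreover have "t i < t (Suc m)" using tlt[of i "Suc m"] im mj step.prems by simp
      moreover have "snd p - (t i + t m) * fst p + t i * t m \<le> 0" using True by (simp add: Lf_eq)
      ultimately have "snd p - (t m + t (Suc m)) * fst p + t m * t (Suc m) < 0" by (intro xle)
      then have "Lf t m (Suc m) p < 0" by (simp add: Lf_eq)
      moreover have "Lf t m (Suc m) p \<ge> 0" using R(4)[of m] im mj by simp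
      ultimately show False by simp
    qed
    then have "region i m p" unfolding region_def using R True mj by auto
    then have "p \<in> cnv t {i, m} \<or> (\<exists>\<rho>\<in>A. p \<in> cnv t \<rho>)"
      using step.IH(1) step.prems(1,2) mj by simp
    then show ?thesis using apx by blast
  next
    case False
    note F1 = False
    show ?thesis
    proof (cases "Lf t m j p \<le> 0")
      case True
      have "t m \<le> fst p"
      proof (rule ccontr)
        assume "\<not> t m \<le> fst p"
        then have "fst p < t m" by simp
        moreover have "t (m - 1) < t j"
        proof -
          have "m - 1 \<in> {1..n}" "j \<in> {1..n}" "m - 1 < j" using im mj step.prems by auto
          then show ?thesis using tlt by blast
        qed
        moreover have "snd p - (t m + t j) * fst p + t m * t j \<le> 0" using True by (simp add: Lf_eq)
        ultimately have "snd p - (t (m - 1) + t m) * fst p + t (m - 1) * t m < 0" by (intro xge)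
        then have "Lf t (m - 1) m p < 0" by (simp add: Lf_eq)
        moreover have "Lf t (m - 1) (Suc (m - 1)) p \<ge> 0" using R(4)[of "m - 1"] im mj by simp
        moreover have "Suc (m - 1) = m" using im by simp
        ultimately show False by simp
      qed
      then have "region m j p" unfolding region_def using R True im by auto
      then have "p \<in> cnv t {m, j} \<or> (\<exists>\<rho>\<in>B. p \<in> cnv t \<rho>)"
        using step.IH(2) step.prems(1,2) im by simp
      then show ?thesis using apx by blast
    next
      case False
      have "p \<in> cnv t {i, m, j}"
        by (rule tri_mem[OF ti tj]) (use False F1 R(3) in auto)
      then show ?thesis by blast
    qed
  qed
qed

lemma trng_sub: "trng Q i j T \<Longrightarrow> \<rho> \<in> T \<Longrightarrow> \<rho> \<subseteq> {i..j}"
proof -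
  assume "trng Q i j T" "\<rho> \<in> T"
  from trng_tri[OF this] obtain a b c where "\<rho> = {a, b, c}" "i \<le> a" "a < b" "b < c" "c \<le> j" by blast
  then show ?thesis by auto
qed

lemma inter_lower:
  assumes "1 \<le> i" "i < m" "m < j" "j \<le> n" "\<sigma> \<subseteq> {i..m}"
  shows "cnv t {i, m, j} \<inter> cnv t \<sigma> \<subseteq> cnv t ({i, m, j} \<inter> \<sigma>)"
proof
  fix p assume p: "p \<in> cnv t {i, m, j} \<inter> cnv t \<sigma>"
  have fa: "finite {i, m, j}" by simp
  have fs: "finite \<sigma>" using assms(5) finite_subset by blast
  have le: "\<forall>k\<in>\<sigma>. Lf t i m (gamma2 (t k)) \<le> 0"
  proof
    fix k assume "k \<in> \<sigma>"
    then have "i \<le> k" "k \<le> m" using assms(5) by auto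
    then have "t i \<le> t k" "t k \<le> t m" using tle[of i k] tle[of k m] assms by auto
    then show "Lf t i m (gamma2 (t k)) \<le> 0" by (simp add: Lf_g mult_nonneg_nonpos)
  qed
  have ge: "\<forall>k\<in>{i, m, j}. Lf t i m (gamma2 (t k)) \<ge> 0"
  proof -
    have "t m < t j" "t i < t j" using tlt[of m j] tlt[of i j] assms by auto
    then show ?thesis by (simp add: Lf_g)
  qed
  have "p \<in> cnv t {k\<in>\<sigma>. Lf t i m (gamma2 (t k)) = 0}"
    using sep_gen(1)[OF fs fa le[unfolded Lf_def] ge[unfolded Lf_def]] p unfolding Lf_def by blast
  moreover have "{k\<in>\<sigma>. Lf t i m (gamma2 (t k)) = 0} \<subseteq> {i, m, j} \<inter> \<sigma>"
  proof
    fix k assume k: "k \<in> {k\<in>\<sigma>. Lf t i m (gamma2 (t k)) = 0}"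
    then have "t k = t i \<or> t k = t m" by (simp add: Lf_g)
    moreover have "k \<in> {1..n}" using k assms by auto
    ultimately have "k = i \<or> k = m" using teq[of k i] teq[of k m] assms by auto
    then show "k \<in> {i, m, j} \<inter> \<sigma>" using k by auto
  qed
  ultimately show "p \<in> cnv t ({i, m, j} \<inter> \<sigma>)" using cnv_mono by blast
qed

lemma inter_upper:
  assumes "1 \<le> i" "i < m" "m < j" "j \<le> n" "\<sigma> \<subseteq> {m..j}"
  shows "cnv t {i, m, j} \<inter> cnv t \<sigma> \<subseteq> cnv t ({i, m, j} \<inter> \<sigma>)"
proof
  fix p assume p: "p \<in> cnv t {i, m, j} \<inter> cnv t \<sigma>"
  have fa: "finite {i, m, j}" by simp
  have fs: "finite \<sigma>" using assms(5) finite_subset by blast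
  have le: "\<forall>k\<in>\<sigma>. Lf t m j (gamma2 (t k)) \<le> 0"
  proof
    fix k assume "k \<in> \<sigma>"
    then have "m \<le> k" "k \<le> j" using assms(5) by auto
    then have "t m \<le> t k" "t k \<le> t j" using tle[of m k] tle[of k j] assms by auto
    then show "Lf t m j (gamma2 (t k)) \<le> 0" by (simp add: Lf_g mult_nonneg_nonpos)
  qed
  have ge: "\<forall>k\<in>{i, m, j}. Lf t m j (gamma2 (t k)) \<ge> 0"
  proof -
    have "t i < t m" "t i < t j" using tlt[of i m] tlt[of i j] assms by auto
    then show ?thesis by (simp add: Lf_g mult_nonpos_nonpos)
  qed
  have "p \<in> cnv t {k\<in>\<sigma>. Lf t m j (gamma2 (t k)) = 0}"
    using sep_gen(1)[OF fs fa le[unfolded Lf_def] ge[unfolded Lf_def]] p unfolding Lf_def by blast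
  moreover have "{k\<in>\<sigma>. Lf t m j (gamma2 (t k)) = 0} \<subseteq> {i, m, j} \<inter> \<sigma>"
  proof
    fix k assume k: "k \<in> {k\<in>\<sigma>. Lf t m j (gamma2 (t k)) = 0}"
    then have "t k = t m \<or> t k = t j" by (simp add: Lf_g)
    moreover have "k \<in> {1..n}" using k assms by auto
    ultimately have "k = m \<or> k = j" using teq[of k m] teq[of k j] assms by auto
    then show "k \<in> {i, m, j} \<inter> \<sigma>" using k by auto
  qed
  ultimately show "p \<in> cnv t ({i, m, j} \<inter> \<sigma>)" using cnv_mono by blast
qed

lemma inter_lu:
  assumes "1 \<le> i" "i < m" "m < j" "j \<le> n" "\<rho> \<subseteq> {i..m}" "\<sigma> \<subseteq> {m..j}"
  shows "cnv t \<rho> \<inter> cnv t \<sigma> \<subseteq> cnv t (\<rho> \<inter> \<sigma>)"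
proof
  fix p assume p: "p \<in> cnv t \<rho> \<inter> cnv t \<sigma>"
  have fr: "finite \<rho>" using assms(5) finite_subset by blast
  have fs: "finite \<sigma>" using assms(6) finite_subset by blast
  have le: "\<forall>k\<in>\<rho>. Lf t i m (gamma2 (t k)) \<le> 0"
  proof
    fix k assume "k \<in> \<rho>"
    then have "i \<le> k" "k \<le> m" using assms(5) by auto
    then have "t i \<le> t k" "t k \<le> t m" using tle[of i k] tle[of k m] assms by auto
    then show "Lf t i m (gamma2 (t k)) \<le> 0" by (simp add: Lf_g mult_nonneg_nonpos)
  qed
  have ge: "\<forall>k\<in>\<sigma>. Lf t i m (gamma2 (t k)) \<ge> 0"
  proof
    fix k assume "k \<in> \<sigma>"
    then have "m \<le> k" "k \<le> j" using assms(6) by auto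
    then have "t i \<le> t k" "t m \<le> t k" using tle[of i k] tle[of m k] assms by auto
    then show "Lf t i m (gamma2 (t k)) \<ge> 0" by (simp add: Lf_g)
  qed
  have "p \<in> cnv t {k\<in>\<sigma>. Lf t i m (gamma2 (t k)) = 0}"
    using sep_gen(2)[OF fr fs le[unfolded Lf_def] ge[unfolded Lf_def]] p unfolding Lf_def by blast
  moreover have "{k\<in>\<sigma>. Lf t i m (gamma2 (t k)) = 0} \<subseteq> {m}"
  proof
    fix k assume k: "k \<in> {k\<in>\<sigma>. Lf t i m (gamma2 (t k)) = 0}"
    then have "t k = t i \<or> t k = t m" by (simp add: Lf_g)
    moreover have "k \<in> {1..n}" "m \<le> k" using k assms by auto
    ultimately have "k = m" using teq[of k i] teq[of k m] assms by auto
    then show "k \<in> {m}" by simp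
  qed
  ultimately have pm: "p = gamma2 (t m)" using cnv_sub_single by blast
  have mn: "m \<in> {1..n}" using assms by auto
  have "m \<in> \<rho>" by (rule extreme[OF _ mn]) (use assms p pm in auto)
  moreover have "m \<in> \<sigma>" by (rule extreme[OF _ mn]) (use assms p pm in auto)
  ultimately show "p \<in> cnv t (\<rho> \<inter> \<sigma>)" using pm cnv_inc by blast
qed

lemma trng_inter:
  "trng Q i j T \<Longrightarrow> 1 \<le> i \<Longrightarrow> j \<le> n \<Longrightarrow> \<rho> \<in> T \<Longrightarrow> \<sigma> \<in> T \<Longrightarrow> cnv t \<rho> \<inter> cnv t \<sigma> \<subseteq> cnv t (\<rho> \<inter> \<sigma>)"
proof (induction arbitrary: \<rho> \<sigma> rule: trng.induct)
  case (base i)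
  then show ?case by simp
next
  case (step i m j A B)
  have im: "i < m" and mj: "m < j" by fact+
  have sA: "\<And>\<rho>. \<rho> \<in> A \<Longrightarrow> \<rho> \<subseteq> {i..m}" using trng_sub step.hyps(5) by blast
  have sB: "\<And>\<rho>. \<rho> \<in> B \<Longrightarrow> \<rho> \<subseteq> {m..j}" using trng_sub step.hyps(6) by blast
  have L1: "cnv t {i, m, j} \<inter> cnv t \<sigma> \<subseteq> cnv t ({i, m, j} \<inter> \<sigma>)" if "\<sigma> \<in> A \<union> B" for \<sigma>
    using that inter_lower[OF step.prems(1) im mj step.prems(2) sA] inter_upper[OF step.prems(1) im mj step.prems(2) sB]
    by blast
  have L2: "cnv t \<rho> \<inter> cnv t \<sigma> \<subseteq> cnv t (\<rho> \<inter> \<sigma>)" if "\<rho> \<in> A" "\<sigma> \<in> B" for \<rho> \<sigma>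
    by (rule inter_lu[OF step.prems(1) im mj step.prems(2) sA[OF that(1)] sB[OF that(2)]])
  have IA: "cnv t \<rho> \<inter> cnv t \<sigma> \<subseteq> cnv t (\<rho> \<inter> \<sigma>)" if "\<rho> \<in> A" "\<sigma> \<in> A" for \<rho> \<sigma>
    using step.IH(1)[OF step.prems(1) _ that] mj step.prems(2) by simp
  have IB: "cnv t \<rho> \<inter> cnv t \<sigma> \<subseteq> cnv t (\<rho> \<inter> \<sigma>)" if "\<rho> \<in> B" "\<sigma> \<in> B" for \<rho> \<sigma>
    using step.IH(2)[OF _ step.prems(2) that] im step.prems(1) by simp
  from step.prems(3) consider "\<rho> = {i, m, j}" | "\<rho> \<in> A" | "\<rho> \<in> B" by blast
  then show ?case
  proof cases
    case 1
    from step.prems(4) consider "\<sigma> = {i, m, j}" | "\<sigma> \<in> A \<union> B" by blast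
    then show ?thesis
    proof cases
      case 1 then show ?thesis using \<open>\<rho> = {i, m, j}\<close> by simp
    next
      case 2 then show ?thesis using L1 \<open>\<rho> = {i, m, j}\<close> by blast
    qed
  next
    case 2
    from step.prems(4) consider "\<sigma> = {i, m, j}" | "\<sigma> \<in> A" | "\<sigma> \<in> B" by blast
    then show ?thesis
    proof cases
      case 1 then show ?thesis using L1[of \<rho>] \<open>\<rho> \<in> A\<close> by (simp add: Int_commute)
    next
      case 2 then show ?thesis using IA \<open>\<rho> \<in> A\<close> by blast
    next
      case 3 then show ?thesis using L2 \<open>\<rho> \<in> A\<close> by blast
    qed
  next
    case 3
    from step.prems(4) consider "\<sigma> = {i, m, j}" | "\<sigma> \<in> A" | "\<sigma> \<in> B" by blast
    then show ?thesis
    proof cases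
      case 1 then show ?thesis using L1[of \<rho>] \<open>\<rho> \<in> B\<close> by (simp add: Int_commute)
    next
      case 2 then show ?thesis using L2[of \<sigma> \<rho>] \<open>\<rho> \<in> B\<close> by (simp add: Int_commute)
    next
      case 3 then show ?thesis using IB \<open>\<rho> \<in> B\<close> by blast
    qed
  qed
qed

end




lemma Lf_zero_edge: "p \<in> cnv t {u, v} \<Longrightarrow> Lf t u v p = 0"
proof -
  assume p: "p \<in> cnv t {u, v}"
  have z: "\<forall>k\<in>{u, v}. aff (t u * t v) (-(t u + t v)) 1 (gamma2 (t k)) = 0"
    using Lf_g[of t u v] unfolding Lf_def by simp
  have "aff (t u * t v) (-(t u + t v)) 1 p \<ge> 0" by (rule hull_aff_ge[OF _ p]) (use z in simp)
  moreover have "aff (t u * t v) (-(t u + t v)) 1 p \<le> 0" by (rule hull_aff_le[OF _ p]) (use z in simp)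
  ultimately show ?thesis unfolding Lf_def by simp
qed

lemma tri3_diff: "tri3 a b c p - tri3 x y z p
   = aff (a*b*c - x*y*z) (-(a*b+b*c+a*c) + (x*y+y*z+x*z)) (a+b+c-x-y-z) p"
  by (simp add: tri3_def aff_def algebra_simps)

lemma tri3_w: "tri3 (t u) (t v) w p - tri3 (t u) (t v) 0 p = w * Lf t u v p"
  by (simp add: tri3_def aff_def Lf_def algebra_simps)

lemma tri3_interp: "k \<in> {a, b, c} \<Longrightarrow> tri3 (t a) (t b) (t c) (gamma2 (t k)) = (t k)^3"
  by (auto simp: tri3_g)

lemma aff_ind:
  fixes x y z :: real
  assumes "x < y" "y < z"
  shows "\<not> affine_dependent {gamma2 x, gamma2 y, gamma2 z}"
proof
  assume "affine_dependent {gamma2 x, gamma2 y, gamma2 z}"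
  then have "collinear {gamma2 x, gamma2 y, gamma2 z}" by (rule affine_dependent_imp_collinear_3)
  then have "collinear {0, gamma2 x - gamma2 y, gamma2 z - gamma2 y}"
    using collinear_3[of "gamma2 x" "gamma2 y" "gamma2 z"] by (simp add: NO_MATCH_def)
  then have "gamma2 x - gamma2 y = 0 \<or> gamma2 z - gamma2 y = 0 \<or> (\<exists>c. gamma2 z - gamma2 y = c *\<^sub>R (gamma2 x - gamma2 y))"
    by (simp add: collinear_lemma)
  moreover have "gamma2 x - gamma2 y \<noteq> 0" "gamma2 z - gamma2 y \<noteq> 0"
    using assms by (auto simp: gamma2_def prod_eq_iff)
  ultimately obtain c where c: "gamma2 z - gamma2 y = c *\<^sub>R (gamma2 x - gamma2 y)" by blast
  then have c1: "z - y = c * (x - y)" and c2: "z^2 - y^2 = c * (x^2 - y^2)"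
    by (auto simp: gamma2_def prod_eq_iff)
  have "(z - y) * (z + y) = c * (x - y) * (x + y)" using c2 by (simp add: algebra_simps power2_eq_square)
  also have "\<dots> = (z - y) * (x + y)" using c1 by simp
  finally have "(z - y) * (z + y) = (z - y) * (x + y)" .
  moreover have "z - y \<noteq> 0" using assms by simp
  ultimately have "z + y = x + y" by simp
  then show False using assms by simp
qed

context
  fixes n :: nat and t :: "nat \<Rightarrow> real"
  assumes mono: "strict_mono_on {1..n} t"
begin

lemma wlow:
  assumes "finite \<rho>" "\<rho> \<subseteq> {1..n}" "u \<in> {1..n}" "v \<in> {1..n}" "u < v"
    "\<forall>k'\<in>\<rho>. \<forall>k\<in>\<rho>. \<not> (k' < u \<and> u < k \<and> k < v)"
  shows "\<exists>w. \<forall>k\<in>\<rho>. (t k - t u) * (t k - t v) * (t k - w) \<ge> 0"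
proof -
  define S where "S = insert (t v) (t ` {k\<in>\<rho>. k < u \<or> v < k})"
  have fS: "finite S" "S \<noteq> {}" using assms(1) by (auto simp: S_def)
  define w where "w = Min S"
  have tuv: "t u < t v" using tlt[OF mono assms(3,4)] assms(5) by simp
  show ?thesis
  proof (intro exI ballI)
    fix k assume k: "k \<in> \<rho>"
    have kn: "k \<in> {1..n}" using k assms(2) by auto
    consider "k < u" | "k = u" | "u < k" "k < v" | "k = v" | "v < k" by linarith
    then show "(t k - t u) * (t k - t v) * (t k - w) \<ge> 0"
    proof cases
      case 1
      have "t k < t u" using tlt[OF mono kn assms(3)] 1 by simp
      then have A: "0 < (t k - t u) * (t k - t v)" using tuv by (simp add: mult_neg_neg)
      have "t k \<in> S" using k 1 by (simp add: S_def)
      then have "w \<le> t k" unfolding w_def using fS by simp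
      then show ?thesis using A by simp
    next
      case 2 then show ?thesis by simp
    next
      case 3
      have "t u < t k" "t k < t v" using tlt[OF mono assms(3) kn] tlt[OF mono kn assms(4)] 3 by auto
      then have A: "(t k - t u) * (t k - t v) < 0" by (simp add: mult_pos_neg)
      have "\<forall>x\<in>S. t k \<le> x"
      proof
        fix x assume "x \<in> S"
        then consider "x = t v" | k' where "k' \<in> \<rho>" "k' < u \<or> v < k'" "x = t k'" unfolding S_def by blast
        then show "t k \<le> x"
        proof cases
          case 1 then show ?thesis using \<open>t k < t v\<close> by simp
        next
          case (2 k')
          have "\<not> k' < u" using assms(6) 2(1) k 3 by blast
          then have "v < k'" using 2(2) by simp
          moreover have "k' \<in> {1..n}" using 2(1) assms(2) by auto
          ultimately have "t v < t k'" using tlt[OF mono assms(4)] by blast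
          then show ?thesis using 2(3) \<open>t k < t v\<close> by simp
        qed
      qed
      then have "t k \<le> w" unfolding w_def using fS by simp
      then have "t k - w \<le> 0" by simp
      then show ?thesis using A by (simp add: mult_nonpos_nonpos)
    next
      case 4 then show ?thesis by simp
    next
      case 5
      have "t v < t k" using tlt[OF mono assms(4) kn] 5 by simp
      then have A: "0 < (t k - t u) * (t k - t v)" using tuv by simp
      have "t k \<in> S" using k 5 by (simp add: S_def)
      then have "w \<le> t k" unfolding w_def using fS by simp
      then show ?thesis using A by simp
    qed
  qed
qed

lemma whigh:
  assumes "finite \<rho>" "\<rho> \<subseteq> {1..n}" "u \<in> {1..n}" "v \<in> {1..n}" "u < v"
    "\<forall>k'\<in>\<rho>. \<forall>k\<in>\<rho>. \<not> (u < k \<and> k < v \<and> v < k')"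
  shows "\<exists>w. \<forall>k\<in>\<rho>. (t k - t u) * (t k - t v) * (t k - w) \<le> 0"
proof -
  define S where "S = insert (t u) (t ` {k\<in>\<rho>. k < u \<or> v < k})"
  have fS: "finite S" "S \<noteq> {}" using assms(1) by (auto simp: S_def)
  define w where "w = Max S"
  have tuv: "t u < t v" using tlt[OF mono assms(3,4)] assms(5) by simp
  show ?thesis
  proof (intro exI ballI)
    fix k assume k: "k \<in> \<rho>"
    have kn: "k \<in> {1..n}" using k assms(2) by auto
    consider "k < u" | "k = u" | "u < k" "k < v" | "k = v" | "v < k" by linarith
    then show "(t k - t u) * (t k - t v) * (t k - w) \<le> 0"
    proof cases
      case 1
      have "t k < t u" using tlt[OF mono kn assms(3)] 1 by simp
      then have A: "0 < (t k - t u) * (t k - t v)" using tuv by (simp add: mult_neg_neg)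
      have "t k \<in> S" using k 1 by (simp add: S_def)
      then have "t k \<le> w" unfolding w_def using fS by simp
      then have "t k - w \<le> 0" by simp
      then show ?thesis using A by (intro mult_nonneg_nonpos) auto
    next
      case 2 then show ?thesis by simp
    next
      case 3
      have "t u < t k" "t k < t v" using tlt[OF mono assms(3) kn] tlt[OF mono kn assms(4)] 3 by auto
      then have A: "(t k - t u) * (t k - t v) < 0" by (simp add: mult_pos_neg)
      have "\<forall>x\<in>S. x \<le> t k"
      proof
        fix x assume "x \<in> S"
        then consider "x = t u" | k' where "k' \<in> \<rho>" "k' < u \<or> v < k'" "x = t k'" unfolding S_def by blast
        then show "x \<le> t k"
        proof cases
          case 1 then show ?thesis using \<open>t u < t k\<close> by simp
        next
          case (2 k')
          have "\<not> v < k'" using assms(6) 2(1) k 3 by blast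
          then have "k' < u" using 2(2) by simp
          moreover have "k' \<in> {1..n}" using 2(1) assms(2) by auto
          ultimately have "t k' < t u" using tlt[OF mono _ assms(3)] by blast
          then show ?thesis using 2(3) \<open>t u < t k\<close> by simp
        qed
      qed
      then have "w \<le> t k" unfolding w_def using fS by simp
      then have "0 \<le> t k - w" by simp
      then show ?thesis using A by (simp add: mult_nonpos_nonneg)
    next
      case 4 then show ?thesis by simp
    next
      case 5
      have "t v < t k" using tlt[OF mono assms(4) kn] 5 by simp
      then have A: "0 < (t k - t u) * (t k - t v)" using tuv by simp
      have "t k \<in> S" using k 5 by (simp add: S_def)
      then have "t k \<le> w" unfolding w_def using fS by simp
      then have "t k - w \<le> 0" by simp
      then show ?thesis using A by (intro mult_nonneg_nonpos) auto
    qed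
  qed
qed

lemma cmp_low:
  assumes "finite \<rho>" "\<rho> \<subseteq> {1..n}" "u \<in> {1..n}" "v \<in> {1..n}" "u < v"
    "\<forall>k'\<in>\<rho>. \<forall>k\<in>\<rho>. \<not> (k' < u \<and> u < k \<and> k < v)"
    "\<forall>k\<in>\<rho>. tri3 ra rb rc (gamma2 (t k)) = (t k)^3"
    "p \<in> cnv t {u, v}" "p \<in> cnv t \<rho>"
  shows "tri3 (t u) (t v) 0 p \<le> tri3 ra rb rc p"
proof -
  obtain w where w: "\<forall>k\<in>\<rho>. (t k - t u) * (t k - t v) * (t k - w) \<ge> 0"
    using wlow[OF assms(1-6)] by blast
  let ?f = "aff (ra*rb*rc - (t u)*(t v)*w) (-(ra*rb+rb*rc+ra*rc) + ((t u)*(t v)+(t v)*w+(t u)*w)) (ra+rb+rc-(t u)-(t v)-w)"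
  have feq: "?f q = tri3 ra rb rc q - tri3 (t u) (t v) w q" for q by (simp only: tri3_diff)
  have "\<forall>k\<in>\<rho>. ?f (gamma2 (t k)) \<ge> 0"
  proof
    fix k assume k: "k \<in> \<rho>"
    have "?f (gamma2 (t k)) = (t k)^3 - ((t k)^3 - (t k - t u) * (t k - t v) * (t k - w))"
      using assms(7) k by (simp only: feq tri3_g)
    then show "?f (gamma2 (t k)) \<ge> 0" using w k by simp
  qed
  from hull_aff_ge[OF this assms(9)] have "tri3 ra rb rc p - tri3 (t u) (t v) w p \<ge> 0" by (simp only: feq)
  moreover have "tri3 (t u) (t v) w p - tri3 (t u) (t v) 0 p = 0"
  proof -
    have "tri3 (t u) (t v) w p - tri3 (t u) (t v) 0 p = w * Lf t u v p"
      by (simp add: tri3_def aff_def Lf_def algebra_simps)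
    then show ?thesis using Lf_zero_edge[OF assms(8)] by simp
  qed
  ultimately show ?thesis by simp
qed

lemma cmp_high:
  assumes "finite \<rho>" "\<rho> \<subseteq> {1..n}" "u \<in> {1..n}" "v \<in> {1..n}" "u < v"
    "\<forall>k'\<in>\<rho>. \<forall>k\<in>\<rho>. \<not> (u < k \<and> k < v \<and> v < k')"
    "\<forall>k\<in>\<rho>. tri3 ra rb rc (gamma2 (t k)) = (t k)^3"
    "p \<in> cnv t {u, v}" "p \<in> cnv t \<rho>"
  shows "tri3 ra rb rc p \<le> tri3 (t u) (t v) 0 p"
proof -
  obtain w where w: "\<forall>k\<in>\<rho>. (t k - t u) * (t k - t v) * (t k - w) \<le> 0"
    using whigh[OF assms(1-6)] by blast
  let ?f = "aff (ra*rb*rc - (t u)*(t v)*w) (-(ra*rb+rb*rc+ra*rc) + ((t u)*(t v)+(t v)*w+(t u)*w)) (ra+rb+rc-(t u)-(t v)-w)"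
  have feq: "?f q = tri3 ra rb rc q - tri3 (t u) (t v) w q" for q by (simp only: tri3_diff)
  have "\<forall>k\<in>\<rho>. ?f (gamma2 (t k)) \<le> 0"
  proof
    fix k assume k: "k \<in> \<rho>"
    have "?f (gamma2 (t k)) = (t k)^3 - ((t k)^3 - (t k - t u) * (t k - t v) * (t k - w))"
      using assms(7) k by (simp only: feq tri3_g)
    then show "?f (gamma2 (t k)) \<le> 0" using w k by simp
  qed
  from hull_aff_le[OF this assms(9)] have "tri3 ra rb rc p - tri3 (t u) (t v) w p \<le> 0" by (simp only: feq)
  moreover have "tri3 (t u) (t v) w p - tri3 (t u) (t v) 0 p = 0"
  proof -
    have "tri3 (t u) (t v) w p - tri3 (t u) (t v) 0 p = w * Lf t u v p"
      by (simp add: tri3_def aff_def Lf_def algebra_simps)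
    then show ?thesis using Lf_zero_edge[OF assms(8)] by simp
  qed
  ultimately show ?thesis by simp
qed

lemma cross_geo:
  assumes "a \<in> {1..n}" "b \<in> {1..n}" "c \<in> {1..n}" "d \<in> {1..n}" "a < c" "c < b" "b < d"
  shows "overlap t {a, b} {c, d} \<and> overlap t {c, d} {a, b} \<and> \<not> less3 t {c, d} {a, b}"
proof -
  have t1: "t a < t c" "t c < t b" "t b < t d"
    using tlt[OF mono assms(1,3)] tlt[OF mono assms(3,2)] tlt[OF mono assms(2,4)] assms(5-7) by auto
  obtain x where x: "t a < x" "x < t b" "t c < x" "x < t d"
    "(t a + t b)*x - t a*t b = (t c + t d)*x - t c*t d"
    "(t a + t b)*((t a + t b)*x - t a*t b) - t a*t b*x < (t c + t d)*((t a + t b)*x - t a*t b) - t c*t d*x"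
    using crosspt[OF t1] by blast
  define p where "p = (x, (t a + t b)*x - t a*t b)"
  have pab: "p \<in> cnv t {a, b}"
    by (rule seg_mem) (use t1 x in \<open>auto simp: p_def Lf_eq\<close>)
  have pcd: "p \<in> cnv t {c, d}"
    by (rule seg_mem) (use t1 x in \<open>auto simp: p_def Lf_eq\<close>)
  have disj: "{a, b} \<inter> {c, d} = {}" using assms(5-7) by auto
  have ov1: "overlap t {a, b} {c, d}" unfolding overlap_def
    by (rule bexI[of _ p]) (use pab pcd disj in simp_all)
  have ov2: "overlap t {c, d} {a, b}" unfolding overlap_def
    by (rule bexI[of _ p]) (use pab pcd disj in \<open>simp_all add: Int_commute\<close>)
  have "hgt t {c, d} p = tri3 (t c) (t d) 0 p" by (rule hgt_edge[OF pcd])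
  moreover have "hgt t {a, b} p = tri3 (t a) (t b) 0 p" by (rule hgt_edge[OF pab])
  moreover have "tri3 (t a) (t b) 0 p < tri3 (t c) (t d) 0 p"
    using x(6) by (simp add: tri3_def aff_def p_def algebra_simps)
  ultimately have "\<not> hgt t {c, d} p \<le> hgt t {a, b} p" by simp
  then have "\<not> less3 t {c, d} {a, b}" unfolding less3_def using pab pcd by blast
  then show ?thesis using ov1 ov2 by blast
qed

end





lemma edge_pair:
  assumes "is_edge n e"
  shows "\<exists>u v. e = {u, v} \<and> u < v \<and> 1 \<le> u \<and> v \<le> n"
proof -
  have sub: "e \<subseteq> {1..n}" and c: "card e = 2" using assms by (auto simp: is_edge_def)
  from c obtain x y where xy: "e = {x, y}" "x \<noteq> y" unfolding card_2_iff by blast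
  have r: "1 \<le> x" "x \<le> n" "1 \<le> y" "y \<le> n" using sub xy(1) by auto
  show ?thesis
  proof (cases "x < y")
    case True
    then show ?thesis using xy r by blast
  next
    case False
    then have "y < x" using xy(2) by simp
    moreover have "e = {y, x}" using xy(1) by blast
    ultimately show ?thesis using r by blast
  qed
qed

lemma main3:
  fixes n :: nat and t :: "nat \<Rightarrow> real"
  assumes mono: "strict_mono_on {1..n} t" and n3: "3 \<le> n"
    and H12: "\<And>u v c d. R1 u v \<Longrightarrow> R2 c d \<Longrightarrow> \<not> below c d u v"
    and H13: "\<And>u v c d. R1 u v \<Longrightarrow> R3 c d \<Longrightarrow> \<not> below c d u v"
    and H23: "\<And>u v c d. R2 u v \<Longrightarrow> R3 c d \<Longrightarrow> \<not> below c d u v"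
    and H22: "\<And>u v c d. R2 u v \<Longrightarrow> R2 c d \<Longrightarrow> \<not> crs u v c d"
    and Rr: "\<And>u v. R1 u v \<or> R2 u v \<or> R3 u v \<Longrightarrow> 1 \<le> u \<and> u < v \<and> v \<le> n"
  shows "\<exists>T. triangulation n t T \<and> (\<forall>u v. R1 u v \<longrightarrow> le3_edge_tri t {u, v} T)
     \<and> (\<forall>u v. R2 u v \<longrightarrow> edge_in {u, v} T) \<and> (\<forall>u v. R3 u v \<longrightarrow> le3_tri_edge t T {u, v})"
proof -
  let ?F = "Fb R1 R2 R3"
  have nF1n: "\<not> ?F 1 n"
  proof
    assume "?F 1 n"
    then show False
    proof (cases rule: FbE)
      case (r1 u v) then show False using Rr[of u v] by (auto simp: below_def)
    next
      case (r3 u v) then show False using Rr[of u v] by (auto simp: below_def)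
    next
      case (r2 u v) then show False using Rr[of u v] by (auto simp: below_def crs_def)
    qed
  qed
  have "1 < n" using n3 by simp
  then obtain T where T: "trng (\<lambda>a b. \<not> ?F a b) 1 n T"
    using trng_exists[OF H12 H13 H23 H22, where i=1 and j=n] nF1n by blast
  have tri: "\<exists>a b c. \<rho> = {a, b, c} \<and> 1 \<le> a \<and> a < b \<and> b < c \<and> c \<le> n \<and> \<not> ?F a b \<and> \<not> ?F b c \<and> \<not> ?F a c"
    if rr: "\<rho> \<in> T" for \<rho>
  proof -
    obtain a b c where h: "\<rho> = {a, b, c}" "1 \<le> a" "a < b" "b < c" "c \<le> n" "\<not> ?F a b" "\<not> ?F b c"
      "\<not> ?F a c \<or> (a = 1 \<and> c = n)"
      using trng_tri[OF T rr] by blast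
    have "\<not> ?F a c" using h(8) nF1n by blast
    then show ?thesis using h by blast
  qed
  have noF: "\<not> ?F x y" if nf: "\<rho> \<in> T" "x \<in> \<rho>" "y \<in> \<rho>" "x < y" for \<rho> x y
  proof -
    obtain a b c where h: "\<rho> = {a, b, c}" "1 \<le> a" "a < b" "b < c" "c \<le> n" "\<not> ?F a b" "\<not> ?F b c" "\<not> ?F a c"
      using tri[OF nf(1)] by blast
    have "x = a \<or> x = b \<or> x = c" "y = a \<or> y = b \<or> y = c" using nf(2,3) h(1) by auto
    then have "(x = a \<and> y = b) \<or> (x = b \<and> y = c) \<or> (x = a \<and> y = c)" using nf(4) h(3,4) by auto
    then show ?thesis using h(6-8) by blast
  qed
  have rng: "\<rho> \<subseteq> {1..n}" if "\<rho> \<in> T" for \<rho>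
    using trng_sub[OF mono T that] .
  obtain m where m: "1 < m" "m < n" "{1, m, n} \<in> T"
    using trng_top[OF T] n3 by auto
  have c1n: "cnv t {1, n} \<subseteq> cnv t {1, m, n}" by (rule cnv_mono) blast
  have cover: "p \<in> (\<Union>\<rho>\<in>T. cnv t \<rho>)" if p: "p \<in> cnv t {1..n}" for p
  proof -
    have g1: "\<forall>k\<in>{1..n}. aff (- t 1) 1 0 (gamma2 (t k)) \<ge> 0"
    proof
      fix k assume "k \<in> {1..n}"
      then have "t 1 \<le> t k" using tle[OF mono, of 1 k] by auto
      then show "aff (- t 1) 1 0 (gamma2 (t k)) \<ge> 0" by simp
    qed
    have r1: "t 1 \<le> fst p" using hull_aff_ge[OF g1 p] by (simp add: aff_def)
    have g2: "\<forall>k\<in>{1..n}. aff (t n) (-1) 0 (gamma2 (t k)) \<ge> 0"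
    proof
      fix k assume "k \<in> {1..n}"
      then have "t k \<le> t n" using tle[OF mono, of k n] by auto
      then show "aff (t n) (-1) 0 (gamma2 (t k)) \<ge> 0" by simp
    qed
    have r2: "fst p \<le> t n" using hull_aff_ge[OF g2 p] by (simp add: aff_def)
    have g3: "\<forall>k\<in>{1..n}. Lf t 1 n (gamma2 (t k)) \<le> 0"
    proof
      fix k assume "k \<in> {1..n}"
      then have "t 1 \<le> t k" "t k \<le> t n" using tle[OF mono, of 1 k] tle[OF mono, of k n] by auto
      then show "Lf t 1 n (gamma2 (t k)) \<le> 0" by (simp add: Lf_g mult_nonneg_nonpos)
    qed
    have r3: "Lf t 1 n p \<le> 0" using hull_aff_le[OF g3[unfolded Lf_def] p] unfolding Lf_def .
    have r4: "Lf t k (Suc k) p \<ge> 0" if k: "1 \<le> k" "k < n" for k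
    proof -
      have g4: "\<forall>l\<in>{1..n}. Lf t k (Suc k) (gamma2 (t l)) \<ge> 0"
      proof
        fix l assume l: "l \<in> {1..n}"
        show "Lf t k (Suc k) (gamma2 (t l)) \<ge> 0"
        proof (cases "l \<le> k")
          case True
          then have "t l \<le> t k" "t l \<le> t (Suc k)" using tle[OF mono, of l k] tle[OF mono, of l "Suc k"] l k by auto
          then show ?thesis by (simp add: Lf_g mult_nonpos_nonpos)
        next
          case False
          then have "t k \<le> t l" "t (Suc k) \<le> t l" using tle[OF mono, of k l] tle[OF mono, of "Suc k" l] l k by auto
          then show ?thesis by (simp add: Lf_g)
        qed
      qed
      show ?thesis using hull_aff_ge[OF g4[unfolded Lf_def] p] unfolding Lf_def .
    qed
    have reg: "region t 1 n p" unfolding region_def[OF mono] using r1 r2 r3 r4 by simp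
    have "p \<in> cnv t {1, n} \<or> (\<exists>\<rho>\<in>T. p \<in> cnv t \<rho>)"
      by (rule region_cover[OF mono T order_refl order_refl reg])
    then show ?thesis using c1n m(3) by blast
  qed
  have triang: "triangulation n t T"
    unfolding triangulation_def
  proof (intro conjI ballI)
    fix \<rho> assume r: "\<rho> \<in> T"
    obtain a b c where h: "\<rho> = {a, b, c}" "1 \<le> a" "a < b" "b < c" "c \<le> n"
      using tri[OF r] by blast
    show "\<rho> \<subseteq> {1..n}" by (rule rng[OF r])
    show "card \<rho> = min n 3" using h n3 by simp
    have "t a < t b" "t b < t c" using tlt[OF mono, of a b] tlt[OF mono, of b c] h by auto
    then have "\<not> affine_dependent {gamma2 (t a), gamma2 (t b), gamma2 (t c)}" by (rule aff_ind)
    then show "\<not> affine_dependent ((\<lambda>i. gamma2 (t i)) ` \<rho>)" using h(1) by simp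
  next
    show "(\<Union>\<rho>\<in>T. cnv t \<rho>) = cnv t {1..n}"
    proof
      show "(\<Union>\<rho>\<in>T. cnv t \<rho>) \<subseteq> cnv t {1..n}" using rng cnv_mono by blast
      show "cnv t {1..n} \<subseteq> (\<Union>\<rho>\<in>T. cnv t \<rho>)" using cover by blast
    qed
  next
    fix \<rho> \<sigma> assume r: "\<rho> \<in> T" "\<sigma> \<in> T"
    show "cnv t \<rho> \<inter> cnv t \<sigma> = cnv t (\<rho> \<inter> \<sigma>)"
    proof
      show "cnv t \<rho> \<inter> cnv t \<sigma> \<subseteq> cnv t (\<rho> \<inter> \<sigma>)"
        using trng_inter[OF mono T _ _ r] n3 by simp
      have "cnv t (\<rho> \<inter> \<sigma>) \<subseteq> cnv t \<rho>" "cnv t (\<rho> \<inter> \<sigma>) \<subseteq> cnv t \<sigma>" by (rule cnv_mono, blast)+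
      then show "cnv t (\<rho> \<inter> \<sigma>) \<subseteq> cnv t \<rho> \<inter> cnv t \<sigma>" by blast
    qed
  qed
  have hTp: "\<exists>\<rho>. \<rho> \<in> T \<and> p \<in> cnv t \<rho> \<and> hT t T p = hgt t \<rho> p" if p: "p \<in> cnv t {1..n}" for p
  proof -
    have ex: "\<exists>\<rho>. \<rho> \<in> T \<and> p \<in> cnv t \<rho>" using cover[OF p] by blast
    define \<rho>0 where "\<rho>0 = (SOME \<rho>. \<rho> \<in> T \<and> p \<in> cnv t \<rho>)"
    have "\<rho>0 \<in> T \<and> p \<in> cnv t \<rho>0" unfolding \<rho>0_def by (rule someI_ex[OF ex])
    moreover have "hT t T p = hgt t \<rho>0 p" unfolding hT_def \<rho>0_def ..
    ultimately show ?thesis by blast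
  qed
  have P1: "le3_edge_tri t {u, v} T" if R: "R1 u v" for u v
    unfolding le3_edge_tri_def
  proof
    fix p assume p: "p \<in> cnv t {u, v}"
    have uv: "1 \<le> u" "u < v" "v \<le> n" using Rr[of u v] R by auto
    have "p \<in> cnv t {1..n}" using p cnv_mono[of "{u, v}" "{1..n}" t] uv by auto
    then obtain \<rho> where r: "\<rho> \<in> T" "p \<in> cnv t \<rho>" "hT t T p = hgt t \<rho> p" using hTp by blast
    obtain a b c where h: "\<rho> = {a, b, c}" "1 \<le> a" "a < b" "b < c" "c \<le> n" using tri[OF r(1)] by blast
    have cond: "\<forall>k'\<in>\<rho>. \<forall>k\<in>\<rho>. \<not> (k' < u \<and> u < k \<and> k < v)"
    proof (intro ballI notI)
      fix k' k assume kk: "k' \<in> \<rho>" "k \<in> \<rho>" "k' < u \<and> u < k \<and> k < v"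
      then have "below k' k u v" by (simp add: below_def)
      then have "?F k' k" using FbI1 R by metis
      moreover have "k' < k" using kk by simp
      ultimately show False using noF[OF r(1) kk(1,2)] by blast
    qed
    have "tri3 (t u) (t v) 0 p \<le> tri3 (t a) (t b) (t c) p"
      by (rule cmp_low[OF mono _ rng[OF r(1)] _ _ uv(2) cond _ p r(2)])
         (use h uv in \<open>auto intro: tri3_interp\<close>)
    moreover have "hgt t \<rho> p = tri3 (t a) (t b) (t c) p" using hgt_tri r(2) h(1) by blast
    moreover have "hgt t {u, v} p = tri3 (t u) (t v) 0 p" by (rule hgt_edge[OF p])
    ultimately show "hgt t {u, v} p \<le> hT t T p" using r(3) by simp
  qed
  have P3: "le3_tri_edge t T {u, v}" if R: "R3 u v" for u v
    unfolding le3_tri_edge_def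
  proof
    fix p assume p: "p \<in> cnv t {u, v}"
    have uv: "1 \<le> u" "u < v" "v \<le> n" using Rr[of u v] R by auto
    have "p \<in> cnv t {1..n}" using p cnv_mono[of "{u, v}" "{1..n}" t] uv by auto
    then obtain \<rho> where r: "\<rho> \<in> T" "p \<in> cnv t \<rho>" "hT t T p = hgt t \<rho> p" using hTp by blast
    obtain a b c where h: "\<rho> = {a, b, c}" "1 \<le> a" "a < b" "b < c" "c \<le> n" using tri[OF r(1)] by blast
    have cond: "\<forall>k'\<in>\<rho>. \<forall>k\<in>\<rho>. \<not> (u < k \<and> k < v \<and> v < k')"
    proof (intro ballI notI)
      fix k' k assume kk: "k' \<in> \<rho>" "k \<in> \<rho>" "u < k \<and> k < v \<and> v < k'"
      then have "below u v k k'" by (simp add: below_def)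
      then have "?F k k'" using FbI3 R by metis
      moreover have "k < k'" using kk by simp
      ultimately show False using noF[OF r(1) kk(2,1)] by blast
    qed
    have "tri3 (t a) (t b) (t c) p \<le> tri3 (t u) (t v) 0 p"
      by (rule cmp_high[OF mono _ rng[OF r(1)] _ _ uv(2) cond _ p r(2)])
         (use h uv in \<open>auto intro: tri3_interp\<close>)
    moreover have "hgt t \<rho> p = tri3 (t a) (t b) (t c) p" using hgt_tri r(2) h(1) by blast
    moreover have "hgt t {u, v} p = tri3 (t u) (t v) 0 p" by (rule hgt_edge[OF p])
    ultimately show "hT t T p \<le> hgt t {u, v} p" using r(3) by simp
  qed
  have P2: "edge_in {u, v} T" if R: "R2 u v" for u v
  proof -
    have uv: "1 \<le> u" "u < v" "v \<le> n" using Rr[of u v] R by auto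
    have nc: "\<forall>\<rho>\<in>T. \<forall>x\<in>\<rho>. \<forall>y\<in>\<rho>. x < y \<longrightarrow> \<not> crs u v x y"
    proof (intro ballI impI notI)
      fix \<rho> x y assume a: "\<rho> \<in> T" "x \<in> \<rho>" "y \<in> \<rho>" "x < y" "crs u v x y"
      then have "?F x y" using FbI2 R by metis
      then show False using noF[OF a(1-4)] by blast
    qed
    have "(u = 1 \<and> v = n) \<or> (\<exists>\<rho>\<in>T. {u, v} \<subseteq> \<rho>)"
      by (rule trng_edge_in[OF T uv nc])
    moreover have "{1, n} \<subseteq> {1, m, n}" by blast
    ultimately show ?thesis unfolding edge_in_def using m(3) by blast
  qed
  show ?thesis using triang P1 P2 P3 by blast
qed


theorem corollary3p5:
  fixes n :: nat and t :: "nat \<Rightarrow> real"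
    and E1 E2 E3 :: "nat set set" and es :: "nat set list"
  assumes t_mono: "strict_mono_on {1..n} t"
    and edges: "\<forall>e \<in> E1 \<union> E2 \<union> E3. is_edge n e"
    and disj: "E1 \<inter> E2 = {}" "E1 \<inter> E3 = {}" "E2 \<inter> E3 = {}"
    and order_dist: "distinct es"
    and order_set: "set es = E1 \<union> E2 \<union> E3"
    and order_blocks: "\<forall>i j. i < j \<and> j < length es \<longrightarrow>
          \<not> (es ! i \<in> E2 \<and> es ! j \<in> E1) \<and>
          \<not> (es ! i \<in> E3 \<and> es ! j \<in> E1) \<and>
          \<not> (es ! i \<in> E3 \<and> es ! j \<in> E2)"
    and order_cross: "\<forall>i j. i < j \<and> j < length es \<longrightarrow>
          less3 t (es ! i) (es ! j) \<or> \<not> overlap t (es ! i) (es ! j)"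
    and E2_noncross: "\<forall>e \<in> E2. \<forall>f \<in> E2. e \<noteq> f \<longrightarrow> \<not> overlap t e f"
  shows "\<exists>T. triangulation n t T \<and>
           (\<forall>e \<in> E1. le3_edge_tri t e T) \<and>
           (\<forall>e \<in> E2. edge_in e T) \<and>
           (\<forall>e \<in> E3. le3_tri_edge t T e)"
proof -
  define R1 where "R1 = (\<lambda>u v. u < v \<and> {u, v} \<in> E1)"
  define R2 where "R2 = (\<lambda>u v. u < v \<and> {u, v} \<in> E2)"
  define R3 where "R3 = (\<lambda>u v. u < v \<and> {u, v} \<in> E3)"
  have Rr: "1 \<le> u \<and> u < v \<and> v \<le> n" if "R1 u v \<or> R2 u v \<or> R3 u v" for u v
  proof -
    have uv: "u < v" "{u, v} \<in> E1 \<union> E2 \<union> E3" using that unfolding R1_def R2_def R3_def by auto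
    then have "is_edge n {u, v}" using edges by blast
    then have "{u, v} \<subseteq> {1..n}" unfolding is_edge_def by blast
    then show ?thesis using uv by auto
  qed
  have ordlem: "less3 t e f \<or> \<not> overlap t e f"
    if e: "e \<in> set es" and f: "f \<in> set es" and ne: "e \<noteq> f"
      and nb: "\<And>x y. x < y \<Longrightarrow> y < length es \<Longrightarrow> es ! x = f \<Longrightarrow> es ! y = e \<Longrightarrow> False" for e f
  proof -
    obtain x where x: "x < length es" "es ! x = e" using e by (auto simp: in_set_conv_nth)
    obtain y where y: "y < length es" "es ! y = f" using f by (auto simp: in_set_conv_nth)
    have "x \<noteq> y" using x y ne by auto
    moreover have "\<not> y < x"
    proof
      assume "y < x"
      from nb[OF this x(1) y(2) x(2)] show False .
    qed
    ultimately have "x < y" by simp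
    then have "less3 t (es ! x) (es ! y) \<or> \<not> overlap t (es ! x) (es ! y)" using order_cross y(1) by blast
    then show ?thesis using x y by simp
  qed
  have gen: False
    if "{u, v} \<in> Ea" "{c, d} \<in> Eb" "Ea \<inter> Eb = {}" "{u, v} \<in> set es" "{c, d} \<in> set es"
       "\<forall>x y. x < y \<and> y < length es \<longrightarrow> \<not> (es ! x \<in> Eb \<and> es ! y \<in> Ea)"
       "1 \<le> c" "c < u" "u < d" "d < v" "v \<le> n"
    for u v c d and Ea Eb :: "nat set set"
  proof -
    have mem: "c \<in> {1..n}" "d \<in> {1..n}" "u \<in> {1..n}" "v \<in> {1..n}" using that(7-11) by auto
    have g: "overlap t {c, d} {u, v} \<and> overlap t {u, v} {c, d} \<and> \<not> less3 t {u, v} {c, d}"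
      using cross_geo[OF t_mono mem that(8,9,10)] .
    have ne: "{u, v} \<noteq> {c, d}"
    proof
      assume eq: "{u, v} = {c, d}"
      have "{c, d} \<in> Ea" using that(1) unfolding eq .
      then have "{c, d} \<in> Ea \<inter> Eb" using that(2) by (rule IntI)
      then show False using that(3) by simp
    qed
    have "less3 t {u, v} {c, d} \<or> \<not> overlap t {u, v} {c, d}"
    proof (rule ordlem[OF that(4,5) ne])
      fix x y assume xy: "x < y" "y < length es" "es ! x = {c, d}" "es ! y = {u, v}"
      have "\<not> (es ! x \<in> Eb \<and> es ! y \<in> Ea)" using that(6) xy(1,2) by blast
      then show False using that(1,2) xy(3,4) by simp
    qed
    then show False using g by blast
  qed
  have H12: "\<not> below c d u v" if "R1 u v" "R2 c d" for u v c d
  proof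
    assume b: "below c d u v"
    have "{u, v} \<in> E1" "{c, d} \<in> E2" using that unfolding R1_def R2_def by auto
    moreover have "1 \<le> c" "v \<le> n" using Rr[of c d] Rr[of u v] that by auto
    moreover have "{u, v} \<in> set es" "{c, d} \<in> set es" using order_set calculation(1,2) by auto
    moreover have "\<forall>x y. x < y \<and> y < length es \<longrightarrow> \<not> (es ! x \<in> E2 \<and> es ! y \<in> E1)"
      using order_blocks by blast
    moreover have "c < u" "u < d" "d < v" using b by (auto simp: below_def)
    ultimately show False
      using gen[of u v E1 c d E2] disj(1) by blast
  qed
  have H13: "\<not> below c d u v" if "R1 u v" "R3 c d" for u v c d
  proof
    assume b: "below c d u v"
    have "{u, v} \<in> E1" "{c, d} \<in> E3" using that unfolding R1_def R3_def by auto
    moreover have "1 \<le> c" "v \<le> n" using Rr[of c d] Rr[of u v] that by auto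
    moreover have "{u, v} \<in> set es" "{c, d} \<in> set es" using order_set calculation(1,2) by auto
    moreover have "\<forall>x y. x < y \<and> y < length es \<longrightarrow> \<not> (es ! x \<in> E3 \<and> es ! y \<in> E1)"
      using order_blocks by blast
    moreover have "c < u" "u < d" "d < v" using b by (auto simp: below_def)
    ultimately show False
      using gen[of u v E1 c d E3] disj(2) by blast
  qed
  have H23: "\<not> below c d u v" if "R2 u v" "R3 c d" for u v c d
  proof
    assume b: "below c d u v"
    have "{u, v} \<in> E2" "{c, d} \<in> E3" using that unfolding R2_def R3_def by auto
    moreover have "1 \<le> c" "v \<le> n" using Rr[of c d] Rr[of u v] that by auto
    moreover have "{u, v} \<in> set es" "{c, d} \<in> set es" using order_set calculation(1,2) by auto
    moreover have "\<forall>x y. x < y \<and> y < length es \<longrightarrow> \<not> (es ! x \<in> E3 \<and> es ! y \<in> E2)"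
      using order_blocks by blast
    moreover have "c < u" "u < d" "d < v" using b by (auto simp: below_def)
    ultimately show False
      using gen[of u v E2 c d E3] disj(3) by blast
  qed
  have H22: "\<not> crs u v c d" if "R2 u v" "R2 c d" for u v c d
  proof
    assume cr: "crs u v c d"
    have m: "{u, v} \<in> E2" "{c, d} \<in> E2" using that unfolding R2_def by auto
    have r: "1 \<le> u" "u < v" "v \<le> n" "1 \<le> c" "c < d" "d \<le> n" using Rr[of c d] Rr[of u v] that by auto
    from cr consider "below u v c d" | "below c d u v" unfolding crs_def by blast
    then show False
    proof cases
      case 1
      then have o: "u < c" "c < v" "v < d" by (auto simp: below_def)
      have mem: "u \<in> {1..n}" "v \<in> {1..n}" "c \<in> {1..n}" "d \<in> {1..n}" using r by auto
      have "overlap t {u, v} {c, d} \<and> overlap t {c, d} {u, v} \<and> \<not> less3 t {c, d} {u, v}"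
        using cross_geo[OF t_mono mem o] .
      then have "overlap t {u, v} {c, d}" by blast
      moreover have "{u, v} \<noteq> {c, d}"
      proof
        assume eq: "{u, v} = {c, d}"
        have "u \<in> {u, v}" by simp
        then have "u \<in> {c, d}" unfolding eq .
        then have "u = c \<or> u = d" by simp
        then show False using o by linarith
      qed
      moreover have "{u, v} \<noteq> {c, d} \<longrightarrow> \<not> overlap t {u, v} {c, d}"
      proof -
        have "\<forall>f\<in>E2. {u, v} \<noteq> f \<longrightarrow> \<not> overlap t {u, v} f" using E2_noncross m(1) by (rule bspec)
        then show ?thesis using m(2) by (rule bspec)
      qed
      ultimately show False by blast
    next
      case 2
      then have o: "c < u" "u < d" "d < v" by (auto simp: below_def)
      have mem: "c \<in> {1..n}" "d \<in> {1..n}" "u \<in> {1..n}" "v \<in> {1..n}" using r by auto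
      have "overlap t {c, d} {u, v} \<and> overlap t {u, v} {c, d} \<and> \<not> less3 t {u, v} {c, d}"
        using cross_geo[OF t_mono mem o] .
      then have "overlap t {u, v} {c, d}" by blast
      moreover have "{u, v} \<noteq> {c, d}"
      proof
        assume eq: "{u, v} = {c, d}"
        have "u \<in> {u, v}" by simp
        then have "u \<in> {c, d}" unfolding eq .
        then have "u = c \<or> u = d" by simp
        then show False using o by linarith
      qed
      moreover have "{u, v} \<noteq> {c, d} \<longrightarrow> \<not> overlap t {u, v} {c, d}"
      proof -
        have "\<forall>f\<in>E2. {u, v} \<noteq> f \<longrightarrow> \<not> overlap t {u, v} f" using E2_noncross m(1) by (rule bspec)
        then show ?thesis using m(2) by (rule bspec)
      qed
      ultimately show False by blast
    qed
  qed
  have epair: "\<exists>u v. e = {u, v} \<and> u < v" if ee: "e \<in> E1 \<union> E2 \<union> E3" for e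
  proof -
    have "is_edge n e" using edges ee by (rule bspec)
    from edge_pair[OF this] obtain u v where h: "e = {u, v} \<and> u < v \<and> 1 \<le> u \<and> v \<le> n" by metis
    then have uvf: "e = {u, v} \<and> u < v" by (simp only: conj_assoc)
    show ?thesis by (rule exI[of _ u], rule exI[of _ v], rule uvf)
  qed
  show ?thesis
  proof (cases "3 \<le> n")
    case True
    have ex: "\<exists>T. triangulation n t T \<and> (\<forall>u v. R1 u v \<longrightarrow> le3_edge_tri t {u, v} T)
       \<and> (\<forall>u v. R2 u v \<longrightarrow> edge_in {u, v} T) \<and> (\<forall>u v. R3 u v \<longrightarrow> le3_tri_edge t T {u, v})"
      by (rule main3[OF t_mono True H12 H13 H23 H22 Rr])
    then obtain T where TT: "triangulation n t T \<and> (\<forall>u v. R1 u v \<longrightarrow> le3_edge_tri t {u, v} T)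
       \<and> (\<forall>u v. R2 u v \<longrightarrow> edge_in {u, v} T) \<and> (\<forall>u v. R3 u v \<longrightarrow> le3_tri_edge t T {u, v})"
      by (rule exE)
    have T1: "triangulation n t T" using TT by (rule conjunct1)
    have T2: "\<forall>u v. R1 u v \<longrightarrow> le3_edge_tri t {u, v} T" using conjunct2[OF TT] by (rule conjunct1)
    have T3: "\<forall>u v. R2 u v \<longrightarrow> edge_in {u, v} T" using conjunct2[OF conjunct2[OF TT]] by (rule conjunct1)
    have T4: "\<forall>u v. R3 u v \<longrightarrow> le3_tri_edge t T {u, v}" using conjunct2[OF conjunct2[OF TT]] by (rule conjunct2)
    have P1: "\<forall>e \<in> E1. le3_edge_tri t e T"
    proof
      fix e assume e: "e \<in> E1"
      have "\<exists>u v. e = {u, v} \<and> u < v" by (rule epair) (use e in simp)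
      then obtain u v where uv0: "e = {u, v} \<and> u < v" by metis
      have "R1 u v" unfolding R1_def using uv0 e by simp
      then have "le3_edge_tri t {u, v} T" using T2 by simp
      then show "le3_edge_tri t e T" using uv0 by simp
    qed
    have P2: "\<forall>e \<in> E2. edge_in e T"
    proof
      fix e assume e: "e \<in> E2"
      have "\<exists>u v. e = {u, v} \<and> u < v" by (rule epair) (use e in simp)
      then obtain u v where uv0: "e = {u, v} \<and> u < v" by metis
      have "R2 u v" unfolding R2_def using uv0 e by simp
      then have "edge_in {u, v} T" using T3 by simp
      then show "edge_in e T" using uv0 by simp
    qed
    have P3: "\<forall>e \<in> E3. le3_tri_edge t T e"
    proof
      fix e assume e: "e \<in> E3"
      have "\<exists>u v. e = {u, v} \<and> u < v" by (rule epair) (use e in simp)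
      then obtain u v where uv0: "e = {u, v} \<and> u < v" by metis
      have "R3 u v" unfolding R3_def using uv0 e by simp
      then have "le3_tri_edge t T {u, v}" using T4 by simp
      then show "le3_tri_edge t T e" using uv0 by simp
    qed
    show ?thesis by (rule exI[of _ T]) (intro conjI T1 P1 P2 P3)
  next
    case False
    then have n2: "n \<le> 2" by simp
    define T where "T = {{1..n}}"
    have ai: "\<not> affine_dependent ((\<lambda>i. gamma2 (t i)) ` {1..n})"
    proof -
      consider "n = 0" | "n = 1" | "n = 2" using n2 by linarith
      then show ?thesis
      proof cases
        case 1 then show ?thesis by simp
      next
        case 2 then show ?thesis by simp
      next
        case 3
        then have "{1..n} = {1, 2}" by auto
        then show ?thesis by simp
      qed
    qed
    have t1: "\<forall>\<rho>\<in>T. \<rho> \<subseteq> {1..n} \<and> card \<rho> = min n 3 \<and> \<not> affine_dependent ((\<lambda>i. gamma2 (t i)) ` \<rho>)"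
      using ai n2 by (simp add: T_def)
    have t2: "(\<Union>\<rho>\<in>T. cnv t \<rho>) = cnv t {1..n}" by (simp add: T_def)
    have t3: "\<forall>\<rho>\<in>T. \<forall>\<sigma>\<in>T. cnv t \<rho> \<inter> cnv t \<sigma> = cnv t (\<rho> \<inter> \<sigma>)" by (simp add: T_def)
    have tri: "triangulation n t T"
      unfolding triangulation_def using t1 t2 t3 by blast
    have eq: "e = {1..n}" if "e \<in> E1 \<union> E2 \<union> E3" for e
    proof -
      have "e \<subseteq> {1..n}" "card e = 2" using edges that unfolding is_edge_def by auto
      moreover have "card {1..n} \<le> card e" using n2 \<open>card e = 2\<close> by simp
      ultimately show ?thesis using card_seteq[of "{1..n}" e] by blast
    qed
    have hTe: "hT t T p = hgt t {1..n} p" if "p \<in> cnv t {1..n}" for p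
    proof -
      have "(SOME \<rho>. \<rho> \<in> T \<and> p \<in> cnv t \<rho>) = {1..n}"
        by (rule some_equality) (use that in \<open>auto simp: T_def\<close>)
      then show ?thesis unfolding hT_def by simp
    qed
    have "\<forall>e \<in> E1. le3_edge_tri t e T"
    proof
      fix e assume e: "e \<in> E1"
      then have "e = {1..n}" using eq by blast
      then show "le3_edge_tri t e T" unfolding le3_edge_tri_def using hTe by simp
    qed
    moreover have "\<forall>e \<in> E2. edge_in e T"
    proof
      fix e assume e: "e \<in> E2"
      then have "e = {1..n}" using eq by blast
      then show "edge_in e T" unfolding edge_in_def T_def by simp
    qed
    moreover have "\<forall>e \<in> E3. le3_tri_edge t T e"
    proof
      fix e assume e: "e \<in> E3"
      then have "e = {1..n}" using eq by blast
      then show "le3_tri_edge t T e" unfolding le3_tri_edge_def using hTe by simp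
    qed
    ultimately show ?thesis using tri by blast
  qed
qed


end
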